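(* Let $T>0$, $x\in\mathbb{R}$, let $(X^x_t)_{0\le t\le T}$ solve $X^x_t=x+\int_0^t\alpha(X^x_s)\,ds+W_t$ with $W$ a standard Brownian motion, and assume the setting described in the context (in particular the representation of $\mathbb{E}\Psi(X^x_T)$ given there). Let $K>0$ and let $X^{x,K}_T$ denote the output of the truncated rejection procedure at level $K$ described in the context. Let $\Psi$ be a measurable function with $\mathbb{E}[\Psi^2(\tilde B^x_T)]<\infty$. Then: (a) $$\left|\mathbb{E}\Psi(X^x_T)-\mathbb{E}\Psi(X^{x,K}_T)\right|\le \sqrt{\mathbb{E}\left[\Psi^2(\tilde B^x_T)\right]}\left(\frac{\mathbb{P}\left(\sup_{0\le\theta\le T}\varphi(\tilde B^x_\theta)>K\right)}{p_K\sqrt{p_\infty}}+\frac{\sqrt{\mathbb{P}\left(\sup_{0\le\theta\le T}\varphi(\tilde B^x_\theta)>K\right)}}{p_K}\right),$$ where $$p_K=\mathbb{E}\left[\exp\left(-\int_0^T K\wedge\varphi(\tilde B^x_\theta)\,d\theta\right)\right],\qquad p_\infty=\mathbb{E}\left[\exp\left(-\int_0^T\varphi(\tilde B^x_\theta)\,d\theta\right)\right].$$ (b) If moreover $\Psi$ is bounded, then $$\left|\mathbb{E}\Psi(X^x_T)-\mathbb{E}\Psi(X^{x,K}_T)\right|\le \frac{2\|\Psi\|_\infty}{p_K}\,\mathbb{P}\left(\sup_{0\le\theta\le T}\varphi(\tilde B^x_\theta)>K\right).$$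
   Context: $\alpha:\mathbb{R}\to\mathbb{R}$ is $C^1$, $A(y)=\int_0^y\alpha(z)\,dz$, and $\varphi(y)=\frac{\alpha^2(y)+\alpha'(y)}{2}$ is assumed nonnegative (it may be unbounded). The function $\theta\mapsto\exp\left(-\frac{(\theta-x)^2}{2T}+A(\theta)\right)$ is integrable and $(\tilde B^x_t)_{0\le t\le T}$ is a Brownian bridge from $\tilde B^x_0=x$ whose terminal value has law $\mathbb{P}(\tilde B^x_T\in d\theta)=C\exp\left(-\frac{(\theta-x)^2}{2T}+A(\theta)\right)d\theta$ ($C$ a normalising constant). Standing assumption (exact-simulation representation): for every measurable $\Psi$ with the relevant expectations finite, $$\mathbb{E}\Psi(X^x_T)=\frac{\mathbb{E}\left[\Psi(\tilde B^x_T)\exp\left(-\int_0^T\varphi(\tilde B^x_\theta)d\theta\right)\right]}{\mathbb{E}\left[\exp\left(-\int_0^T\varphi(\tilde B^x_\theta)d\theta\right)\right]}.$$ Truncated procedure at level $K$: let $N^K$ be a unit-intensity Poisson point process on $[0,T]\times[0,K]$ independent of $\tilde B^x$, and let $D=\{(t,y)\in[0,T]\times\mathbb{R}_+: y\le\varphi(\tilde B^x_t)\}$. A path of $\tilde B^x$ is accepted iff no point of $N^K$ lies in $D$, and $X^{x,K}_T$ is $\tilde B^x_T$ conditioned on acceptance, i.e. $\mathbb{E}\Psi(X^{x,K}_T)=\mathbb{E}[\Psi(\tilde B^x_T)\mathbf{1}_{N^K\cap D=\emptyset}]/\mathbb{P}(N^K\cap D=\emptyset)$. Thus $p_K$ is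 the acceptance probability of this truncated procedure and $p_\infty$ that of the untruncated one. *)

theory Defs
  imports "HOL-Probability.Probability"
begin

definition brownian_motion :: "'a measure \<Rightarrow> real \<Rightarrow> (real \<Rightarrow> 'a \<Rightarrow> real) \<Rightarrow> bool" where
  "brownian_motion M T W \<longleftrightarrow>
     prob_space M \<and>
     (\<forall>t\<in>{0..T}. W t \<in> borel_measurable M) \<and>
     (\<forall>\<omega>\<in>space M. W 0 \<omega> = 0 \<and> continuous_on {0..T} (\<lambda>t. W t \<omega>)) \<and>
     (\<forall>s t. 0 \<le> s \<and> s < t \<and> t \<le> T \<longrightarrow>
        distributed M lborel (\<lambda>\<omega>. W t \<omega> - W s \<omega>) (\<lambda>z. ennreal (normal_density 0 (sqrt (t - s)) z))) \<and>
     (\<forall>ts. sorted_wrt (<) ts \<and> set ts \<subseteq> {0..T} \<longrightarrow>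
        prob_space.indep_vars M (\<lambda>_. borel) (\<lambda>i \<omega>. W (ts ! Suc i) \<omega> - W (ts ! i) \<omega>) {..<length ts - 1})"

definition poisson_point_process :: "'a measure \<Rightarrow> (real \<times> real) set \<Rightarrow> ('a \<Rightarrow> (real \<times> real) set) \<Rightarrow> bool" where
  "poisson_point_process M R N \<longleftrightarrow>
     (\<forall>\<omega>\<in>space M. finite (N \<omega>) \<and> N \<omega> \<subseteq> R) \<and>
     (\<forall>S. S \<in> sets lborel \<and> S \<subseteq> R \<longrightarrow>
        (\<lambda>\<omega>. card (N \<omega> \<inter> S)) \<in> measurable M (count_space UNIV) \<and>
        (\<forall>n. measure M {\<omega>\<in>space M. card (N \<omega> \<inter> S) = n}
               = measure lborel S ^ n / fact n * exp (- measure lborel S))) \<and>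
     (\<forall>Ss. (\<forall>S\<in>set Ss. S \<in> sets lborel \<and> S \<subseteq> R) \<and> disjoint_family_on (\<lambda>i. Ss ! i) {..<length Ss} \<longrightarrow>
        prob_space.indep_vars M (\<lambda>_. count_space UNIV) (\<lambda>i \<omega>. card (N \<omega> \<inter> Ss ! i)) {..<length Ss})"

definition rv_events :: "'a measure \<Rightarrow> 'b measure \<Rightarrow> ('a \<Rightarrow> 'b) \<Rightarrow> 'a set set" where
  "rv_events M Mx X = {X -` E \<inter> space M | E. E \<in> sets Mx}"

definition A_fun :: "(real \<Rightarrow> real) \<Rightarrow> real \<Rightarrow> real" where
  "A_fun \<alpha> y = (LBINT z=0..y. \<alpha> z)"

definition phi_fun :: "(real \<Rightarrow> real) \<Rightarrow> (real \<Rightarrow> real) \<Rightarrow> real \<Rightarrow> real" where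
  "phi_fun \<alpha> \<alpha>' y = ((\<alpha> y)\<^sup>2 + \<alpha>' y) / 2"

text \<open>Unnormalised density of the terminal value of the bridge.\<close>
definition end_dens :: "(real \<Rightarrow> real) \<Rightarrow> real \<Rightarrow> real \<Rightarrow> real \<Rightarrow> real" where
  "end_dens \<alpha> x T \<theta> = exp (- (\<theta> - x)\<^sup>2 / (2 * T) + A_fun \<alpha> \<theta>)"

text \<open>Brownian bridge from x (at time 0) to Theta (at time T), built from a Brownian motion W
  independent of Theta.\<close>
definition bridge :: "real \<Rightarrow> real \<Rightarrow> (real \<Rightarrow> 'a \<Rightarrow> real) \<Rightarrow> ('a \<Rightarrow> real) \<Rightarrow> real \<Rightarrow> 'a \<Rightarrow> real" where
  "bridge x T W \<Theta> t \<omega> = x + t / T * (\<Theta> \<omega> - x) + W t \<omega> - t / T * W T \<omega>"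

definition accept_event :: "'a measure \<Rightarrow> (real \<Rightarrow> real) \<Rightarrow> (real \<Rightarrow> 'a \<Rightarrow> real) \<Rightarrow> real
     \<Rightarrow> ('a \<Rightarrow> (real \<times> real) set) \<Rightarrow> 'a set" where
  "accept_event M \<phi> B T N =
     {\<omega>\<in>space M. N \<omega> \<inter> {(t, y). 0 \<le> t \<and> t \<le> T \<and> 0 \<le> y \<and> y \<le> \<phi> (B t \<omega>)} = {}}"

text \<open>E Psi(X^{x,K}_T): Psi(B_T) conditioned on acceptance.\<close>
definition truncated_expectation :: "'a measure \<Rightarrow> (real \<Rightarrow> real) \<Rightarrow> (real \<Rightarrow> 'a \<Rightarrow> real) \<Rightarrow> real
     \<Rightarrow> ('a \<Rightarrow> (real \<times> real) set) \<Rightarrow> (real \<Rightarrow> real) \<Rightarrow> real" where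
  "truncated_expectation M \<phi> B T N \<Psi> =
     (\<integral>\<omega>. \<Psi> (B T \<omega>) * indicator (accept_event M \<phi> B T N) \<omega> \<partial>M) / measure M (accept_event M \<phi> B T N)"

end

theory Submission
  imports Defs
begin


lemma rat_near:
  fixes a b t d :: real
  assumes "a < b" "t \<in> {a..b}" "d > 0"
  shows "\<exists>q\<in>\<rat>. q \<in> {a..b} \<and> \<bar>q - t\<bar> < d"
proof (cases "t < b")
  case True
  obtain q where "q \<in> \<rat>" "t < q" "q < min b (t + d)"
    using Rats_dense_in_real[of t "min b (t+d)"] True assms by auto
  then show ?thesis using assms by (intro bexI[of _ q]) auto
next
  case False
  then have tb: "t = b" using assms by auto
  obtain q where "q \<in> \<rat>" "max a (t - d) < q" "q < t"
    using Rats_dense_in_real[of "max a (t - d)" t] tb assms by auto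
  then show ?thesis using assms by (intro bexI[of _ q]) auto
qed

locale pathw =
  fixes T K :: real and F :: "real \<Rightarrow> 'a \<Rightarrow> real" and \<Omega> :: "'a set"
  assumes T_pos: "T > 0" and K_pos: "K > 0"
    and F_cont: "\<And>\<omega>. \<omega> \<in> \<Omega> \<Longrightarrow> continuous_on {0..T} (\<lambda>t. F t \<omega>)"
    and F_nn: "\<And>t \<omega>. F t \<omega> \<ge> 0"
begin

definition g :: "'a \<Rightarrow> real \<Rightarrow> real" where "g \<omega> t = min K (F t \<omega>)"
definition Iv :: "nat \<Rightarrow> nat \<Rightarrow> real set" where
  "Iv m i = {T * real i / 2^m .. T * (real i + 1) / 2^m}"
definition hh :: "nat \<Rightarrow> nat \<Rightarrow> 'a \<Rightarrow> real" where
  "hh m i \<omega> = (SUP q \<in> \<rat> \<inter> Iv m i. g \<omega> q)"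
definition kk :: "nat \<Rightarrow> nat \<Rightarrow> 'a \<Rightarrow> nat" where
  "kk m i \<omega> = nat \<lceil>2^m * hh m i \<omega>\<rceil>"
definition ht :: "nat \<Rightarrow> nat \<Rightarrow> real" where
  "ht m j = min K (real j / 2^m)"
definition R :: "nat \<Rightarrow> (nat \<Rightarrow> nat) \<Rightarrow> (real \<times> real) set" where
  "R m c = (\<Union>i<2^m. Iv m i \<times> {0 .. ht m (c i)})"
definition Rw :: "nat \<Rightarrow> 'a \<Rightarrow> (real \<times> real) set" where
  "Rw m \<omega> = R m (\<lambda>i. kk m i \<omega>)"
definition D :: "'a \<Rightarrow> (real \<times> real) set" where
  "D \<omega> = {p. fst p \<in> {0..T} \<and> 0 \<le> snd p \<and> snd p \<le> g \<omega> (fst p)}"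
definition Lf :: "'a \<Rightarrow> real" where
  "Lf \<omega> = (LINT t:{0..T}|lborel. g \<omega> t)"
definition Cs :: "nat \<Rightarrow> (nat \<Rightarrow> nat) set" where
  "Cs m = PiE {..<2^m} (\<lambda>_. {0..nat \<lceil>2^m * K\<rceil>})"
definition kv :: "nat \<Rightarrow> 'a \<Rightarrow> nat \<Rightarrow> nat" where
  "kv m \<omega> = restrict (\<lambda>i. kk m i \<omega>) {..<2^m}"

lemma g_cont: "\<omega> \<in> \<Omega> \<Longrightarrow> continuous_on {0..T} (g \<omega>)"
  unfolding g_def[abs_def] by (intro continuous_intros F_cont)

lemma g_bounds: "0 \<le> g \<omega> t" "g \<omega> t \<le> K"
  using F_nn[of t \<omega>] K_pos by (auto simp: g_def)

lemma Iv_lt: "T * real i / 2^m < T * (real i + 1) / 2^m"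
  using T_pos by (simp add: divide_strict_right_mono)

lemma Iv_sub: "i < 2^m \<Longrightarrow> Iv m i \<subseteq> {0..T}"
proof -
  assume i: "i < 2^m"
  have "real i + 1 \<le> 2^m" using i
    by (metis of_nat_Suc of_nat_le_iff Suc_leI add.commute of_nat_numeral of_nat_power)
  then have "T * (real i + 1) \<le> T * 2^m" using T_pos by simp
  then have "T * (real i + 1) / 2^m \<le> T" by (simp add: divide_le_eq)
  then show ?thesis using T_pos by (auto simp: Iv_def)
qed

lemma Iv_ne: "\<rat> \<inter> Iv m i \<noteq> {}"
proof -
  obtain q where "q \<in> \<rat>" "q \<in> {T * real i / 2^m .. T * (real i + 1) / 2^m}"
    using rat_near[OF Iv_lt[of i m], of "T * real i / 2^m" 1] Iv_lt[of i m] by auto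
  then show ?thesis by (auto simp: Iv_def)
qed

lemma bdd_g: "bdd_above (g \<omega> ` S)"
  by (intro bdd_aboveI2[where M=K]) (rule g_bounds)

lemma hh_bounds: "0 \<le> hh m i \<omega>" "hh m i \<omega> \<le> K"
proof -
  obtain q where q: "q \<in> \<rat> \<inter> Iv m i" using Iv_ne by blast
  show "0 \<le> hh m i \<omega>" unfolding hh_def
    using q g_bounds by (intro cSUP_upper2[OF bdd_g q]) auto
  show "hh m i \<omega> \<le> K" unfolding hh_def
    using g_bounds Iv_ne by (intro cSUP_least) auto
qed

lemma hh_ge:
  assumes \<omega>: "\<omega> \<in> \<Omega>" and i: "i < 2^m" and t: "t \<in> Iv m i"
  shows "g \<omega> t \<le> hh m i \<omega>"
proof (rule ccontr)
  assume "\<not> ?thesis"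
  then have e: "g \<omega> t - hh m i \<omega> > 0" by simp
  have tT: "t \<in> {0..T}" using Iv_sub[OF i] t by auto
  from g_cont[OF \<omega>, unfolded continuous_on_iff] tT e obtain d where d: "d > 0"
    "\<And>x'. x' \<in> {0..T} \<Longrightarrow> dist x' t < d \<Longrightarrow> dist (g \<omega> x') (g \<omega> t) < g \<omega> t - hh m i \<omega>"
    by metis
  obtain q where q: "q \<in> \<rat>" "q \<in> Iv m i" "\<bar>q - t\<bar> < d"
    using rat_near[OF Iv_lt[of i m], of t d] t d by (auto simp: Iv_def)
  have "dist (g \<omega> q) (g \<omega> t) < g \<omega> t - hh m i \<omega>"
    using d(2)[of q] q Iv_sub[OF i] by (auto simp: dist_real_def)
  then have "g \<omega> q > hh m i \<omega>" by (auto simp: dist_real_def)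
  moreover have "g \<omega> q \<le> hh m i \<omega>" unfolding hh_def
    using q by (intro cSUP_upper[OF _ bdd_g]) auto
  ultimately show False by simp
qed

lemma ev_small: "c > 0 \<Longrightarrow> eventually (\<lambda>m. C / 2^m < (c::real)) sequentially"
proof -
  assume c: "c > 0"
  have "(\<lambda>m. C * (1/2)^m :: real) \<longlonglongrightarrow> 0"
    by (intro tendsto_mult_right_zero LIMSEQ_realpow_zero) auto
  from order_tendstoD(2)[OF this c] show ?thesis by (simp add: power_divide)
qed

lemma t_in_some_Iv:
  assumes t: "t \<in> {0..T}"
  shows "\<exists>i<2^m. t \<in> Iv m i"
proof (cases "t = T")
  case True
  have "(2::nat)^m \<ge> 1" by simp
  then have "real (2^m - 1::nat) + 1 = 2^m" by (simp add: of_nat_diff)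
  then have "t \<in> Iv m (2^m - 1)" using True T_pos t
    by (auto simp: Iv_def field_simps)
  then show ?thesis by (intro exI[of _ "2^m - 1"]) auto
next
  case False
  then have t': "0 \<le> t" "t < T" using t by auto
  define i where "i = nat \<lfloor>t * 2^m / T\<rfloor>"
  have f0: "0 \<le> t * 2^m / T" using t' T_pos by simp
  have r: "real i = of_int \<lfloor>t * 2^m / T\<rfloor>" using f0 by (simp add: i_def)
  have a: "real i \<le> t * 2^m / T" "t * 2^m / T < real i + 1"
    using r by (simp, linarith)
  have "t * 2^m / T < 2^m" using t' T_pos by (simp add: divide_less_eq)
  then have "real i < 2^m" using a by linarith
  then have "i < 2^m" by (metis of_nat_less_iff of_nat_numeral of_nat_power)
  moreover have "t \<in> Iv m i" using a T_pos
    by (auto simp: Iv_def field_simps)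
  ultimately show ?thesis by blast
qed

lemma Iv_parent: "Iv (Suc m) j \<subseteq> Iv m (j div 2)"
proof -
  have e1: "real j \<ge> 2 * real (j div 2)" by linarith
  have "j \<le> 2 * (j div 2) + 1" by presburger
  then have "real j \<le> real (2 * (j div 2) + 1)" by (rule of_nat_mono)
  then have e2: "real j + 1 \<le> 2 * (real (j div 2) + 1)" by simp
  have tp: "T / 2^m \<ge> 0" using T_pos by simp
  have "T / 2^m * real (j div 2) \<le> T / 2^m * (real j / 2)"
    using e1 by (intro mult_left_mono tp) simp
  then have "T * real (j div 2) / 2^m \<le> T * real j / 2^Suc m" by (simp add: field_simps)
  moreover have "T / 2^m * ((real j + 1) / 2) \<le> T / 2^m * (real (j div 2) + 1)"
    using e2 by (intro mult_left_mono tp) simp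
  then have "T * (real j + 1) / 2^Suc m \<le> T * (real (j div 2) + 1) / 2^m" by (simp add: field_simps)
  ultimately show ?thesis by (auto simp: Iv_def)
qed

lemma hh_mono: "hh (Suc m) j \<omega> \<le> hh m (j div 2) \<omega>"
  unfolding hh_def using Iv_ne Iv_parent[of m j]
  by (intro cSUP_subset_mono bdd_g) auto

lemma real_kk: "real (kk m i \<omega>) = of_int \<lceil>2^m * hh m i \<omega>\<rceil>"
  using hh_bounds[of m i \<omega>] by (simp add: kk_def)

lemma kk_mono: "real (kk (Suc m) j \<omega>) / 2^Suc m \<le> real (kk m (j div 2) \<omega>) / 2^m"
proof -
  have "2^Suc m * hh (Suc m) j \<omega> \<le> of_int (2 * \<lceil>2^m * hh m (j div 2) \<omega>\<rceil>)"
  proof -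
    have "2^Suc m * hh (Suc m) j \<omega> \<le> 2 * (2^m * hh m (j div 2) \<omega>)"
      using hh_mono[of m j \<omega>] by simp
    also have "\<dots> \<le> 2 * of_int \<lceil>2^m * hh m (j div 2) \<omega>\<rceil>" by simp
    finally show ?thesis by simp
  qed
  then have "\<lceil>2^Suc m * hh (Suc m) j \<omega>\<rceil> \<le> 2 * \<lceil>2^m * hh m (j div 2) \<omega>\<rceil>"
    by (rule ceiling_le)
  then have "real (kk (Suc m) j \<omega>) \<le> 2 * real (kk m (j div 2) \<omega>)"
    unfolding real_kk by (metis of_int_le_iff of_int_mult of_int_numeral)
  then show ?thesis by (simp add: field_simps)
qed

lemma ht_mono: "ht (Suc m) (kk (Suc m) j \<omega>) \<le> ht m (kk m (j div 2) \<omega>)"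
  unfolding ht_def using kk_mono[of m j \<omega>] by simp

lemma Rw_mono: "Rw (Suc m) \<omega> \<subseteq> Rw m \<omega>"
proof
  fix p assume "p \<in> Rw (Suc m) \<omega>"
  then obtain j where j: "j < 2^Suc m" "fst p \<in> Iv (Suc m) j" "0 \<le> snd p"
     "snd p \<le> ht (Suc m) (kk (Suc m) j \<omega>)"
    by (auto simp: Rw_def R_def mem_Times_iff)
  have "j div 2 < 2^m" using j(1) by auto
  then show "p \<in> Rw m \<omega>" using j Iv_parent[of m j] ht_mono[of m j \<omega>]
    unfolding Rw_def R_def by (auto simp: mem_Times_iff intro!: bexI[of _ "j div 2"])
qed

lemma Rw_decseq: "decseq (\<lambda>m. Rw m \<omega>)"
  by (rule decseq_SucI) (rule Rw_mono)

lemma D_sub_Rw: "\<omega> \<in> \<Omega> \<Longrightarrow> D \<omega> \<subseteq> Rw m \<omega>"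
proof
  fix p assume \<omega>: "\<omega> \<in> \<Omega>" and p: "p \<in> D \<omega>"
  then have t: "fst p \<in> {0..T}" and y: "0 \<le> snd p" "snd p \<le> g \<omega> (fst p)" by (auto simp: D_def)
  obtain i where i: "i < 2^m" "fst p \<in> Iv m i" using t_in_some_Iv[OF t] by blast
  have "g \<omega> (fst p) \<le> hh m i \<omega>" by (rule hh_ge[OF \<omega> i])
  also have "\<dots> \<le> real (kk m i \<omega>) / 2^m" unfolding real_kk
    by (simp add: field_simps ceiling_correct)
  finally have "snd p \<le> ht m (kk m i \<omega>)" using y g_bounds[of \<omega> "fst p"] by (simp add: ht_def)
  then show "p \<in> Rw m \<omega>" using i y unfolding Rw_def R_def
    by (auto simp: mem_Times_iff intro!: bexI[of _ i])
qed

lemma Rw_Inter_sub: "\<omega> \<in> \<Omega> \<Longrightarrow> (\<Inter>m. Rw m \<omega>) \<subseteq> D \<omega>"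
proof
  fix p assume \<omega>: "\<omega> \<in> \<Omega>" and p: "p \<in> (\<Inter>m. Rw m \<omega>)"
  obtain t y where ty: "p = (t, y)" by (cases p)
  have mem: "\<exists>i<2^m. t \<in> Iv m i \<and> 0 \<le> y \<and> y \<le> ht m (kk m i \<omega>)" for m
    using p ty by (auto simp: Rw_def R_def mem_Times_iff)
  from mem[of 0] obtain i0 where "i0 < 2^0" "t \<in> Iv 0 i0" "0 \<le> y" by blast
  then have t: "t \<in> {0..T}" and y0: "0 \<le> y" using Iv_sub[of 0 0] by auto
  have "y \<le> g \<omega> t"
  proof (rule ccontr)
    assume "\<not> ?thesis"
    then have e: "(y - g \<omega> t) / 2 > 0" by simp
    from g_cont[OF \<omega>, unfolded continuous_on_iff] t e obtain d where d: "d > 0"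
      "\<And>x'. x' \<in> {0..T} \<Longrightarrow> dist x' t < d \<Longrightarrow> dist (g \<omega> x') (g \<omega> t) < (y - g \<omega> t) / 2"
      by metis
    from eventually_conj[OF ev_small[OF d(1), of T] ev_small[OF e, of 1]]
    obtain m where m: "T / 2^m < d" "1 / 2^m < (y - g \<omega> t) / 2"
      by (auto simp: eventually_sequentially)
    from mem[of m] obtain i where i: "i < 2^m" "t \<in> Iv m i" "y \<le> ht m (kk m i \<omega>)" by blast
    have "hh m i \<omega> \<le> g \<omega> t + (y - g \<omega> t) / 2" unfolding hh_def
    proof (rule cSUP_least)
      show "\<rat> \<inter> Iv m i \<noteq> {}" by (rule Iv_ne)
      fix q assume q: "q \<in> \<rat> \<inter> Iv m i"
      have "\<bar>q - t\<bar> \<le> T * (real i + 1) / 2^m - T * real i / 2^m"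
        using q i(2) by (auto simp: Iv_def)
      also have "\<dots> = T / 2^m" by (simp add: field_simps)
      finally have "dist q t < d" using m by (simp add: dist_real_def)
      then have "dist (g \<omega> q) (g \<omega> t) < (y - g \<omega> t) / 2"
        using d(2)[of q] q Iv_sub[OF i(1)] by auto
      then have "\<bar>g \<omega> q - g \<omega> t\<bar> < (y - g \<omega> t) / 2" by (simp add: dist_real_def)
      then show "g \<omega> q \<le> g \<omega> t + (y - g \<omega> t) / 2" using abs_ge_self[of "g \<omega> q - g \<omega> t"] by linarith
    qed
    moreover have "real (kk m i \<omega>) / 2^m < hh m i \<omega> + 1 / 2^m"
    proof -
      have "real (kk m i \<omega>) < 2^m * hh m i \<omega> + 1" unfolding real_kk
        using ceiling_correct[of "2^m * hh m i \<omega>"] by linarith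
      then show ?thesis by (simp add: field_simps)
    qed
    moreover have "y \<le> real (kk m i \<omega>) / 2^m" using i(3) by (simp add: ht_def)
    moreover have aux: "\<And>a b k e c :: real. a \<le> b + c \<Longrightarrow> k < a + e \<Longrightarrow> y \<le> k \<Longrightarrow> e < c \<Longrightarrow> 2 * c = y - b \<Longrightarrow> False"
      by linarith
    moreover have "2 * ((y - g \<omega> t) / 2) = y - g \<omega> t" by simp
    ultimately show False using m(2) by blast
  qed
  then show "p \<in> D \<omega>" using t y0 ty by (simp add: D_def)
qed

lemma D_eq: "\<omega> \<in> \<Omega> \<Longrightarrow> D \<omega> = (\<Inter>m. Rw m \<omega>)"
  using D_sub_Rw Rw_Inter_sub by blast

lemma R_closed: "closed (R m c)"
  unfolding R_def Iv_def by (auto intro!: closed_UN closed_Times)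

lemma R_box: "R m c \<subseteq> {0..T} \<times> {0..K}"
  using Iv_sub by (auto simp: R_def ht_def)

lemma R_sets: "R m c \<in> sets lborel"
  using R_closed by (simp add: borel_closed)

lemma box_fin: "emeasure lborel ({0..T} \<times> {0..K::real}) < \<infinity>"
proof -
  have "{0..T} \<times> {0..K::real} = cbox (0,0) (T,K)"
    by (auto simp: cbox_Pair_eq)
  then show ?thesis using emeasure_lborel_cbox_finite by metis
qed

lemma D_closed: "\<omega> \<in> \<Omega> \<Longrightarrow> closed (D \<omega>)"
  using D_eq R_closed unfolding Rw_def by auto

lemma R_fin: "emeasure lborel (R m c) \<noteq> \<infinity>"
proof -
  have "emeasure lborel (R m c) \<le> emeasure lborel ({0..T} \<times> {0..K::real})"
    by (intro emeasure_mono R_box) (simp add: borel_closed closed_Times)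
  then show ?thesis using box_fin by (auto simp: top_unique)
qed

lemma Lf_integrable: "\<omega> \<in> \<Omega> \<Longrightarrow> integrable lborel (\<lambda>t. indicator {0..T} t * g \<omega> t)"
  using borel_integrable_atLeastAtMost'[OF g_cont] unfolding set_integrable_def by simp

lemma Lf_nonneg: "0 \<le> Lf \<omega>"
  unfolding Lf_def set_lebesgue_integral_def
  using g_bounds by (intro integral_nonneg_AE) (auto simp: indicator_def)

lemma emeasure_D: assumes \<omega>: "\<omega> \<in> \<Omega>" shows "emeasure lborel (D \<omega>) = ennreal (Lf \<omega>)"
proof -
  have Dset: "D \<omega> \<in> sets (lborel \<Otimes>\<^sub>M lborel)"
    unfolding lborel_prod using D_closed[OF \<omega>] by (simp add: borel_closed)
  have "emeasure lborel (D \<omega>) = emeasure (lborel \<Otimes>\<^sub>M lborel) (D \<omega>)" by (simp add: lborel_prod)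
  also have "\<dots> = (\<integral>\<^sup>+t. emeasure lborel (Pair t -` D \<omega>) \<partial>lborel)"
    by (rule lborel.emeasure_pair_measure_alt[OF Dset])
  also have "\<dots> = (\<integral>\<^sup>+t. ennreal (indicator {0..T} t * g \<omega> t) \<partial>lborel)"
  proof (rule nn_integral_cong)
    fix t :: real
    show "emeasure lborel (Pair t -` D \<omega>) = ennreal (indicator {0..T} t * g \<omega> t)"
    proof (cases "t \<in> {0..T}")
      case True
      then have "Pair t -` D \<omega> = {0..g \<omega> t}" by (auto simp: D_def)
      then show ?thesis using True g_bounds[of \<omega> t] by simp
    next
      case False
      then have "Pair t -` D \<omega> = {}" by (auto simp: D_def)
      then show ?thesis using False by simp
    qed
  qed
  also have "\<dots> = ennreal (Lf \<omega>)"
    unfolding Lf_def set_lebesgue_integral_def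
    using Lf_integrable[OF \<omega>] g_bounds
    by (subst nn_integral_eq_integral) (auto simp: indicator_def)
  finally show ?thesis .
qed

lemma Rw_tendsto: assumes \<omega>: "\<omega> \<in> \<Omega>" shows "(\<lambda>m. measure lborel (Rw m \<omega>)) \<longlonglongrightarrow> Lf \<omega>"
proof -
  have "(\<lambda>m. emeasure lborel (Rw m \<omega>)) \<longlonglongrightarrow> emeasure lborel (\<Inter>m. Rw m \<omega>)"
    using Rw_decseq R_sets R_fin unfolding Rw_def
    by (intro Lim_emeasure_decseq) auto
  then have "(\<lambda>m. emeasure lborel (Rw m \<omega>)) \<longlonglongrightarrow> ennreal (Lf \<omega>)"
    using D_eq[OF \<omega>] emeasure_D[OF \<omega>] by simp
  from tendsto_enn2real[OF this Lf_nonneg] show ?thesis by (simp add: measure_def)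
qed

lemma kk_le: "kk m i \<omega> \<le> nat \<lceil>2^m * K\<rceil>"
  unfolding kk_def using hh_bounds[of m i \<omega>]
  by (intro nat_mono ceiling_mono) simp

lemma kv_Cs: "kv m \<omega> \<in> Cs m"
  using kk_le by (auto simp: kv_def Cs_def)

lemma R_kv: "R m (kv m \<omega>) = Rw m \<omega>"
  unfolding R_def Rw_def kv_def by auto

lemma Cs_fin: "finite (Cs m)"
  unfolding Cs_def by (intro finite_PiE) auto

lemma measure_Rw_sum:
  "measure lborel (Rw m \<omega>) = (\<Sum>c\<in>Cs m. indicator {\<omega>'. kv m \<omega>' = c} \<omega> * measure lborel (R m c))"
proof -
  have "(\<Sum>c\<in>Cs m. indicator {\<omega>'. kv m \<omega>' = c} \<omega> * measure lborel (R m c))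
     = (\<Sum>c\<in>Cs m. if kv m \<omega> = c then measure lborel (R m c) else 0)"
    by (intro sum.cong) (auto simp: indicator_def)
  also have "\<dots> = measure lborel (R m (kv m \<omega>))"
    using kv_Cs[of m \<omega>] Cs_fin[of m] by (simp add: sum.delta)
  finally show ?thesis by (simp add: R_kv)
qed

lemma kv_eq_iff: "kv m \<omega> = c \<longleftrightarrow> c \<in> extensional {..<2^m} \<and> (\<forall>i<2^m. kk m i \<omega> = c i)"
proof
  assume "kv m \<omega> = c" then show "c \<in> extensional {..<2^m} \<and> (\<forall>i<2^m. kk m i \<omega> = c i)"
    unfolding kv_def by auto
next
  assume a: "c \<in> extensional {..<2^m} \<and> (\<forall>i<2^m. kk m i \<omega> = c i)"
  show "kv m \<omega> = c" unfolding kv_def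
    by (rule extensionalityI[OF restrict_extensional]) (use a in auto)
qed

context
  fixes Mg :: "'a measure"
  assumes sp: "space Mg = \<Omega>"
    and Fm: "\<And>t. t \<in> {0..T} \<Longrightarrow> F t \<in> borel_measurable Mg"
begin

lemma hh_meas: "i < 2^m \<Longrightarrow> hh m i \<in> borel_measurable Mg"
  unfolding hh_def[abs_def] g_def
proof (rule borel_measurable_cSUP)
  assume i: "i < 2^m"
  show "countable (\<rat> \<inter> Iv m i)" by (intro countable_Int1 countable_rat)
  fix q assume "q \<in> \<rat> \<inter> Iv m i"
  then have "q \<in> {0..T}" using Iv_sub[OF i] by auto
  then show "(\<lambda>x. min K (F q x)) \<in> borel_measurable Mg"
    by (intro borel_measurable_min borel_measurable_const Fm)
next
  fix x show "bdd_above ((\<lambda>q. min K (F q x)) ` (\<rat> \<inter> Iv m i))"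
    by (intro bdd_aboveI2[where M=K]) simp
qed

lemma kk_meas: "i < 2^m \<Longrightarrow> (\<lambda>\<omega>. kk m i \<omega>) \<in> measurable Mg (count_space UNIV)"
proof -
  assume i: "i < 2^m"
  have "(\<lambda>\<omega>. 2^m * hh m i \<omega>) \<in> borel_measurable Mg"
    by (intro borel_measurable_times borel_measurable_const hh_meas i)
  from measurable_compose[OF this measurable_real_ceiling]
  have c: "(\<lambda>\<omega>. \<lceil>2^m * hh m i \<omega>\<rceil>) \<in> measurable Mg (count_space UNIV)" .
  have n: "nat \<in> measurable (count_space UNIV) (count_space UNIV)" by simp
  from measurable_compose[OF c n] show ?thesis unfolding kk_def .
qed

lemma kv_event: "{\<omega>\<in>space Mg. kv m \<omega> = c} \<in> sets Mg"
proof -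
  have "{\<omega>\<in>space Mg. kv m \<omega> = c} = (if c \<in> extensional {..<2^m} then
      (\<Inter>i\<in>{..<2^m}. {\<omega>\<in>space Mg. kk m i \<omega> = c i}) \<inter> space Mg else {})"
    using kv_eq_iff[of m _ c] by auto
  moreover have "(\<Inter>i\<in>{..<2^m}. {\<omega>\<in>space Mg. kk m i \<omega> = c i}) \<inter> space Mg \<in> sets Mg"
  proof -
    have "{..<(2::nat)^m} \<noteq> {}" by (simp add: lessThan_empty_iff)
    then show ?thesis using kk_meas
      by (intro sets.Int sets.top sets.finite_INT) (auto intro: measurable_sets)
  qed
  ultimately show ?thesis by simp
qed

lemma Lf_meas: "Lf \<in> borel_measurable Mg"
proof (rule borel_measurable_LIMSEQ_real)
  fix \<omega> assume "\<omega> \<in> space Mg"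
  then have "(\<Sum>c\<in>Cs m. indicator {\<omega>'\<in>space Mg. kv m \<omega>' = c} \<omega> * measure lborel (R m c))
     = measure lborel (Rw m \<omega>)" for m
    unfolding measure_Rw_sum by (intro sum.cong refl) (simp add: indicator_def)
  moreover have "\<omega> \<in> \<Omega>" using \<open>\<omega> \<in> space Mg\<close> sp by simp
  ultimately show "(\<lambda>m. \<Sum>c\<in>Cs m. indicator {\<omega>'\<in>space Mg. kv m \<omega>' = c} \<omega> * measure lborel (R m c)) \<longlonglongrightarrow> Lf \<omega>"
    using Rw_tendsto by simp
next
  fix m show "(\<lambda>\<omega>. \<Sum>c\<in>Cs m. indicator {\<omega>'\<in>space Mg. kv m \<omega>' = c} \<omega> * measure lborel (R m c)) \<in> borel_measurable Mg"
    by (intro borel_measurable_sum borel_measurable_times borel_measurable_const borel_measurable_indicator kv_event)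
qed

end

end


lemma finite_dec_empty:
  fixes Rs :: "nat \<Rightarrow> 'b set"
  assumes dec: "decseq Rs" and fin: "finite F" and e: "F \<inter> (\<Inter>m. Rs m) = {}"
  shows "\<exists>m. F \<inter> Rs m = {}"
  using fin e
proof (induction F rule: finite_induct)
  case empty then show ?case by simp
next
  case (insert p F)
  then obtain m1 where m1: "F \<inter> Rs m1 = {}" by auto
  from insert.prems obtain m2 where m2: "p \<notin> Rs m2" by auto
  have "F \<inter> Rs (max m1 m2) = {}" using m1 dec[THEN decseqD, of m1 "max m1 m2"] by auto
  moreover have "p \<notin> Rs (max m1 m2)" using m2 dec[THEN decseqD, of m2 "max m1 m2"] by auto
  ultimately show ?case by (intro exI[of _ "max m1 m2"]) auto
qed

locale core = pathw T K F "space M" + prob_space M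
  for T K :: real and F :: "real \<Rightarrow> 'a \<Rightarrow> real" and M :: "'a measure" +
  fixes Mg :: "'a measure" and N :: "'a \<Rightarrow> (real \<times> real) set"
  assumes sub: "sets Mg \<subseteq> sets M" and spg: "space Mg = space M"
    and Fm: "\<And>t. t \<in> {0..T} \<Longrightarrow> F t \<in> borel_measurable Mg"
    and Nfin: "\<And>\<omega>. \<omega> \<in> space M \<Longrightarrow> finite (N \<omega>)"
    and Nsub: "\<And>\<omega>. \<omega> \<in> space M \<Longrightarrow> N \<omega> \<subseteq> {0..T} \<times> {0..K}"
    and Hset: "\<And>S. S \<in> sets lborel \<Longrightarrow> S \<subseteq> {0..T} \<times> {0..K} \<Longrightarrow> {\<omega>\<in>space M. N \<omega> \<inter> S = {}} \<in> sets M"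
    and indepH: "\<And>S G0. S \<in> sets lborel \<Longrightarrow> S \<subseteq> {0..T} \<times> {0..K} \<Longrightarrow> G0 \<in> sets Mg \<Longrightarrow>
        measure M (G0 \<inter> {\<omega>\<in>space M. N \<omega> \<inter> S = {}}) = measure M G0 * exp (- measure lborel S)"
begin

definition H :: "(real \<times> real) set \<Rightarrow> 'a set" where "H S = {\<omega>\<in>space M. N \<omega> \<inter> S = {}}"
definition Am :: "nat \<Rightarrow> 'a set" where "Am m = {\<omega>\<in>space M. N \<omega> \<inter> Rw m \<omega> = {}}"
definition Acc :: "'a set" where "Acc = {\<omega>\<in>space M. N \<omega> \<inter> D \<omega> = {}}"

lemma subalg: "subalgebra M Mg"
  using sub spg by (simp add: subalgebra_def)

lemma meas_g_M: "f \<in> measurable Mg N' \<Longrightarrow> f \<in> measurable M N'"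
  by (rule measurable_from_subalg[OF subalg])

lemma Lf_meas_g: "Lf \<in> borel_measurable Mg"
  by (rule Lf_meas[OF spg Fm])

lemma mRw_meas: "(\<lambda>\<omega>. measure lborel (Rw m \<omega>)) \<in> borel_measurable Mg"
proof -
  have "(\<lambda>\<omega>. \<Sum>c\<in>Cs m. indicator {\<omega>'\<in>space Mg. kv m \<omega>' = c} \<omega> * measure lborel (R m c)) \<in> borel_measurable Mg"
    by (intro borel_measurable_sum borel_measurable_times borel_measurable_const borel_measurable_indicator kv_event[OF spg Fm])
  moreover have "\<And>\<omega>. \<omega> \<in> space Mg \<Longrightarrow> (\<Sum>c\<in>Cs m. indicator {\<omega>'\<in>space Mg. kv m \<omega>' = c} \<omega> * measure lborel (R m c))
     = measure lborel (Rw m \<omega>)"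
    unfolding measure_Rw_sum by (intro sum.cong refl) (simp add: indicator_def)
  ultimately show ?thesis by (rule measurable_cong[THEN iffD1, rotated])
qed

lemma H_sets: "S \<in> sets lborel \<Longrightarrow> S \<subseteq> {0..T} \<times> {0..K} \<Longrightarrow> H S \<in> sets M"
  unfolding H_def by (rule Hset)

lemma ind_H:
  assumes S: "S \<in> sets lborel" "S \<subseteq> {0..T} \<times> {0..K}"
    and f: "f \<in> borel_measurable Mg"
  shows "(\<integral>\<^sup>+\<omega>. f \<omega> * indicator (H S) \<omega> \<partial>M) = (\<integral>\<^sup>+\<omega>. f \<omega> \<partial>M) * ennreal (exp (- measure lborel S))"
  using f
proof (induction rule: borel_measurable_induct)
  case (cong f g)
  have "(\<integral>\<^sup>+\<omega>. f \<omega> * indicator (H S) \<omega> \<partial>M) = (\<integral>\<^sup>+\<omega>. g \<omega> * indicator (H S) \<omega> \<partial>M)"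
    using cong(3) spg by (intro nn_integral_cong) auto
  moreover have "(\<integral>\<^sup>+\<omega>. f \<omega> \<partial>M) = (\<integral>\<^sup>+\<omega>. g \<omega> \<partial>M)"
    using cong(3) spg by (intro nn_integral_cong) auto
  ultimately show ?case using cong(4) by simp
next
  case (set A)
  have A: "A \<in> sets M" using set sub by auto
  have "(\<integral>\<^sup>+\<omega>. indicator A \<omega> * indicator (H S) \<omega> \<partial>M) = emeasure M (A \<inter> H S)"
    using A H_sets[OF S] by (simp add: indicator_inter_arith[symmetric])
  also have "\<dots> = ennreal (measure M A * exp (- measure lborel S))"
    using indepH[OF S set] by (simp add: emeasure_eq_measure H_def)
  also have "\<dots> = (\<integral>\<^sup>+\<omega>. indicator A \<omega> \<partial>M) * ennreal (exp (- measure lborel S))"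
    using A by (simp add: emeasure_eq_measure ennreal_mult)
  finally show ?case .
next
  case (mult u c)
  have um: "u \<in> borel_measurable M" by (rule meas_g_M[OF mult(2)])
  have "(\<integral>\<^sup>+\<omega>. c * u \<omega> * indicator (H S) \<omega> \<partial>M) = c * (\<integral>\<^sup>+\<omega>. u \<omega> * indicator (H S) \<omega> \<partial>M)"
    using um H_sets[OF S] by (simp add: nn_integral_cmult[symmetric] mult.assoc)
  also have "\<dots> = c * ((\<integral>\<^sup>+\<omega>. u \<omega> \<partial>M) * ennreal (exp (- measure lborel S)))"
    using mult(4) by simp
  also have "\<dots> = (\<integral>\<^sup>+\<omega>. c * u \<omega> \<partial>M) * ennreal (exp (- measure lborel S))"
    using um by (simp add: nn_integral_cmult mult.assoc)
  finally show ?case .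
next
  case (add u v)
  have um: "u \<in> borel_measurable M" using add by (blast intro: meas_g_M)
  have vm: "v \<in> borel_measurable M" using add by (blast intro: meas_g_M)
  have IHu: "(\<integral>\<^sup>+\<omega>. u \<omega> * indicator (H S) \<omega> \<partial>M) = (\<integral>\<^sup>+\<omega>. u \<omega> \<partial>M) * ennreal (exp (- measure lborel S))"
    using add by blast
  have IHv: "(\<integral>\<^sup>+\<omega>. v \<omega> * indicator (H S) \<omega> \<partial>M) = (\<integral>\<^sup>+\<omega>. v \<omega> \<partial>M) * ennreal (exp (- measure lborel S))"
    using add by blast
  have "(\<integral>\<^sup>+\<omega>. (v \<omega> + u \<omega>) * indicator (H S) \<omega> \<partial>M)
      = (\<integral>\<^sup>+\<omega>. v \<omega> * indicator (H S) \<omega> \<partial>M) + (\<integral>\<^sup>+\<omega>. u \<omega> * indicator (H S) \<omega> \<partial>M)"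
    using um vm H_sets[OF S] by (simp add: distrib_right nn_integral_add)
  also have "\<dots> = ((\<integral>\<^sup>+\<omega>. v \<omega> \<partial>M) + (\<integral>\<^sup>+\<omega>. u \<omega> \<partial>M)) * ennreal (exp (- measure lborel S))"
    using IHu IHv by (simp add: distrib_right)
  also have "\<dots> = (\<integral>\<^sup>+\<omega>. v \<omega> + u \<omega> \<partial>M) * ennreal (exp (- measure lborel S))"
    using um vm by (simp add: nn_integral_add)
  finally show ?case .
next
  case (seq U)
  have Um: "\<And>i. U i \<in> borel_measurable M" using seq by (blast intro: meas_g_M)
  have incU: "incseq U" using seq by blast
  have IHU: "\<And>i. (\<integral>\<^sup>+\<omega>. U i \<omega> * indicator (H S) \<omega> \<partial>M) = (\<integral>\<^sup>+\<omega>. U i \<omega> \<partial>M) * ennreal (exp (- measure lborel S))"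
    using seq by blast
  have inc2: "incseq (\<lambda>i \<omega>. U i \<omega> * indicator (H S) \<omega>)"
    using incU by (auto simp: incseq_def le_fun_def intro: mult_right_mono)
  have "(\<integral>\<^sup>+\<omega>. (SUP i. U i) \<omega> * indicator (H S) \<omega> \<partial>M) = (\<integral>\<^sup>+\<omega>. (SUP i. U i \<omega> * indicator (H S) \<omega>) \<partial>M)"
    by (intro nn_integral_cong) (simp only: SUP_apply SUP_mult_right_ennreal)
  also have "\<dots> = (SUP i. \<integral>\<^sup>+\<omega>. U i \<omega> * indicator (H S) \<omega> \<partial>M)"
    using Um H_sets[OF S] by (intro nn_integral_monotone_convergence_SUP[OF inc2]) simp
  also have "\<dots> = (SUP i. (\<integral>\<^sup>+\<omega>. U i \<omega> \<partial>M) * ennreal (exp (- measure lborel S)))"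
    using IHU by simp
  also have "\<dots> = (SUP i. \<integral>\<^sup>+\<omega>. U i \<omega> \<partial>M) * ennreal (exp (- measure lborel S))"
    by (simp add: SUP_mult_right_ennreal)
  also have "(SUP i. \<integral>\<^sup>+\<omega>. U i \<omega> \<partial>M) = (\<integral>\<^sup>+\<omega>. (SUP i. U i \<omega>) \<partial>M)"
    using Um by (intro nn_integral_monotone_convergence_SUP[symmetric] incU)
  finally show ?case unfolding SUP_apply .
qed

lemma kvE_sets: "{\<omega>'\<in>space Mg. kv m \<omega>' = c} \<in> sets Mg"
  by (rule kv_event[OF spg Fm])

lemma Am_sum: "indicator (Am m) \<omega> = (\<Sum>c\<in>Cs m. indicator {\<omega>'\<in>space Mg. kv m \<omega>' = c} \<omega> * indicator (H (R m c)) \<omega> :: ennreal)"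
proof (cases "\<omega> \<in> space M")
  case True
  have "(\<Sum>c\<in>Cs m. indicator {\<omega>'\<in>space Mg. kv m \<omega>' = c} \<omega> * indicator (H (R m c)) \<omega> :: ennreal)
     = (\<Sum>c\<in>Cs m. if kv m \<omega> = c then indicator (H (R m c)) \<omega> else 0)"
    using True spg by (intro sum.cong) (auto simp: indicator_def)
  also have "\<dots> = indicator (H (R m (kv m \<omega>))) \<omega>"
    using kv_Cs[of m \<omega>] Cs_fin[of m] by (simp add: sum.delta)
  also have "\<dots> = indicator (Am m) \<omega>"
    using True by (simp add: H_def Am_def R_kv indicator_def)
  finally show ?thesis by simp
next
  case False
  then show ?thesis using spg by (simp add: Am_def indicator_def)
qed

lemma meas_ennexp: "(\<lambda>\<omega>. ennreal (exp (- measure lborel (Rw m \<omega>)))) \<in> borel_measurable Mg"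
  using mRw_meas[of m] by measurable

lemma step2:
  assumes f: "f \<in> borel_measurable Mg"
  shows "(\<integral>\<^sup>+\<omega>. f \<omega> * indicator (Am m) \<omega> \<partial>M) = (\<integral>\<^sup>+\<omega>. f \<omega> * ennreal (exp (- measure lborel (Rw m \<omega>))) \<partial>M)"
proof -
  let ?KV = "\<lambda>c. {\<omega>'\<in>space Mg. kv m \<omega>' = c}"
  let ?e = "\<lambda>c. ennreal (exp (- measure lborel (R m c)))"
  have fKV: "(\<lambda>\<omega>. f \<omega> * indicator (?KV c) \<omega>) \<in> borel_measurable Mg" for c
    using f kvE_sets by (intro borel_measurable_times_ennreal borel_measurable_indicator) auto
  have "(\<integral>\<^sup>+\<omega>. f \<omega> * indicator (Am m) \<omega> \<partial>M)
      = (\<integral>\<^sup>+\<omega>. (\<Sum>c\<in>Cs m. f \<omega> * indicator (?KV c) \<omega> * indicator (H (R m c)) \<omega>) \<partial>M)"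
    by (intro nn_integral_cong) (simp add: Am_sum sum_distrib_left mult.assoc)
  also have "\<dots> = (\<Sum>c\<in>Cs m. \<integral>\<^sup>+\<omega>. f \<omega> * indicator (?KV c) \<omega> * indicator (H (R m c)) \<omega> \<partial>M)"
    by (intro nn_integral_sum borel_measurable_times_ennreal[OF meas_g_M[OF fKV]] borel_measurable_indicator H_sets[OF R_sets R_box])
  also have "\<dots> = (\<Sum>c\<in>Cs m. (\<integral>\<^sup>+\<omega>. f \<omega> * indicator (?KV c) \<omega> \<partial>M) * ?e c)"
    by (intro sum.cong refl ind_H[OF R_sets R_box fKV])
  also have "\<dots> = (\<Sum>c\<in>Cs m. \<integral>\<^sup>+\<omega>. f \<omega> * indicator (?KV c) \<omega> * ?e c \<partial>M)"
    using fKV by (intro sum.cong refl nn_integral_multc[symmetric] meas_g_M)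
  also have "\<dots> = (\<integral>\<^sup>+\<omega>. (\<Sum>c\<in>Cs m. f \<omega> * indicator (?KV c) \<omega> * ?e c) \<partial>M)"
    by (intro nn_integral_sum[symmetric] borel_measurable_times_ennreal[OF meas_g_M[OF fKV]] borel_measurable_const)
  also have "\<dots> = (\<integral>\<^sup>+\<omega>. f \<omega> * ennreal (exp (- measure lborel (Rw m \<omega>))) \<partial>M)"
  proof (intro nn_integral_cong)
    fix \<omega> assume \<omega>: "\<omega> \<in> space M"
    have "(\<Sum>c\<in>Cs m. f \<omega> * indicator (?KV c) \<omega> * ?e c) = (\<Sum>c\<in>Cs m. if kv m \<omega> = c then f \<omega> * ?e c else 0)"
      using \<omega> spg by (intro sum.cong) (auto simp: indicator_def)
    also have "\<dots> = f \<omega> * ?e (kv m \<omega>)"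
      using kv_Cs[of m \<omega>] Cs_fin[of m] by (simp add: sum.delta)
    finally show "(\<Sum>c\<in>Cs m. f \<omega> * indicator (?KV c) \<omega> * ?e c) = f \<omega> * ennreal (exp (- measure lborel (Rw m \<omega>)))"
      by (simp add: R_kv)
  qed
  finally show ?thesis .
qed

lemma Am_mono: "Am m \<subseteq> Am (Suc m)"
  using Rw_mono[of m] by (auto simp: Am_def)

lemma Am_Acc: "Am m \<subseteq> Acc"
  using D_sub_Rw by (auto simp: Am_def Acc_def)

lemma Acc_Am: "\<omega> \<in> Acc \<Longrightarrow> \<exists>m. \<omega> \<in> Am m"
proof -
  assume a: "\<omega> \<in> Acc"
  then have \<omega>: "\<omega> \<in> space M" and e: "N \<omega> \<inter> (\<Inter>m. Rw m \<omega>) = {}"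
    using D_eq by (auto simp: Acc_def)
  from finite_dec_empty[OF Rw_decseq Nfin[OF \<omega>] e] \<omega> show ?thesis by (auto simp: Am_def)
qed

lemma SUP_ind: "(SUP m. indicator (Am m) \<omega> :: ennreal) = indicator Acc \<omega>"
proof (cases "\<omega> \<in> Acc")
  case True
  then obtain m where m: "\<omega> \<in> Am m" using Acc_Am by blast
  have "(SUP m. indicator (Am m) \<omega> :: ennreal) \<le> 1"
    by (intro SUP_least) (simp add: indicator_def)
  moreover have "1 \<le> (SUP m. indicator (Am m) \<omega> :: ennreal)"
    using m by (intro SUP_upper2[of m]) auto
  ultimately show ?thesis using True by simp
next
  case False
  then have "\<And>m. \<omega> \<notin> Am m" using Am_Acc by blast
  then show ?thesis using False by simp
qed

lemma measRw_mono: "measure lborel (Rw (Suc m) \<omega>) \<le> measure lborel (Rw m \<omega>)"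
  unfolding Rw_def
  using Rw_mono[of m \<omega>] R_sets R_fin
  by (intro measure_mono_fmeasurable) (auto simp: Rw_def intro!: fmeasurableI simp: less_top)

lemma SUP_exp: assumes \<omega>: "\<omega> \<in> space M"
  shows "(SUP m. ennreal (exp (- measure lborel (Rw m \<omega>)))) = ennreal (exp (- Lf \<omega>))"
proof -
  have inc: "incseq (\<lambda>m. ennreal (exp (- measure lborel (Rw m \<omega>))))"
    using measRw_mono by (intro incseq_SucI ennreal_leI) simp
  have "(\<lambda>m. ennreal (exp (- measure lborel (Rw m \<omega>)))) \<longlonglongrightarrow> ennreal (exp (- Lf \<omega>))"
    by (intro tendsto_ennrealI tendsto_exp tendsto_minus Rw_tendsto \<omega>)
  from LIMSEQ_unique[OF LIMSEQ_SUP[OF inc] this] show ?thesis .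
qed

lemma Am_sets: "Am m \<in> sets M"
proof -
  have "(\<lambda>\<omega>. indicator (Am m) \<omega> :: ennreal) \<in> borel_measurable M"
    unfolding Am_sum
    by (intro borel_measurable_sum borel_measurable_times_ennreal borel_measurable_indicator
        meas_g_M[OF borel_measurable_indicator[OF kvE_sets]] H_sets[OF R_sets R_box])
  then have "Am m \<inter> space M \<in> sets M" using borel_measurable_indicator_iff by blast
  moreover have "Am m \<subseteq> space M" by (auto simp: Am_def)
  ultimately show ?thesis by (simp add: Int_absorb2)
qed

lemma Acc_sets: "Acc \<in> sets M"
proof -
  have "Acc = (\<Union>m. Am m)" using Acc_Am Am_Acc by blast
  then show ?thesis using Am_sets by auto
qed

lemma core_eq:
  assumes f: "f \<in> borel_measurable Mg"
  shows "(\<integral>\<^sup>+\<omega>. f \<omega> * indicator Acc \<omega> \<partial>M) = (\<integral>\<^sup>+\<omega>. f \<omega> * ennreal (exp (- Lf \<omega>)) \<partial>M)"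
proof -
  have fM: "f \<in> borel_measurable M" by (rule meas_g_M[OF f])
  have AmM: "Am m \<in> sets M" for m by (rule Am_sets)
  have "(\<integral>\<^sup>+\<omega>. f \<omega> * indicator Acc \<omega> \<partial>M) = (\<integral>\<^sup>+\<omega>. (SUP m. f \<omega> * indicator (Am m) \<omega>) \<partial>M)"
    by (simp add: SUP_mult_left_ennreal[symmetric] SUP_ind)
  also have "\<dots> = (SUP m. \<integral>\<^sup>+\<omega>. f \<omega> * indicator (Am m) \<omega> \<partial>M)"
  proof (rule nn_integral_monotone_convergence_SUP)
    show "incseq (\<lambda>m \<omega>. f \<omega> * indicator (Am m) \<omega>)"
      using Am_mono by (intro incseq_SucI le_funI mult_left_mono) (auto simp: indicator_def)
    show "(\<lambda>\<omega>. f \<omega> * indicator (Am m) \<omega>) \<in> borel_measurable M" for m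
      using fM AmM by simp
  qed
  also have "\<dots> = (SUP m. \<integral>\<^sup>+\<omega>. f \<omega> * ennreal (exp (- measure lborel (Rw m \<omega>))) \<partial>M)"
    by (simp add: step2[OF f])
  also have "\<dots> = (\<integral>\<^sup>+\<omega>. (SUP m. f \<omega> * ennreal (exp (- measure lborel (Rw m \<omega>)))) \<partial>M)"
  proof (rule nn_integral_monotone_convergence_SUP[symmetric])
    show "incseq (\<lambda>m \<omega>. f \<omega> * ennreal (exp (- measure lborel (Rw m \<omega>))))"
      using measRw_mono by (intro incseq_SucI le_funI mult_left_mono ennreal_leI) auto
    show "(\<lambda>\<omega>. f \<omega> * ennreal (exp (- measure lborel (Rw m \<omega>)))) \<in> borel_measurable M" for m
      by (intro borel_measurable_times_ennreal fM meas_g_M[OF meas_ennexp])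
  qed
  also have "\<dots> = (\<integral>\<^sup>+\<omega>. f \<omega> * ennreal (exp (- Lf \<omega>)) \<partial>M)"
    by (intro nn_integral_cong) (simp add: SUP_mult_left_ennreal[symmetric] SUP_exp)
  finally show ?thesis .
qed

end


lemma amgm_sqrt:
  fixes c U V :: real
  assumes U: "U \<ge> 0" and V: "V \<ge> 0" and h: "\<And>t. t > 0 \<Longrightarrow> c \<le> (t * U + V / t) / 2"
  shows "c \<le> sqrt U * sqrt V"
proof (cases "U > 0 \<and> V > 0")
  case True
  define t where "t = sqrt V / sqrt U"
  have t: "t > 0" using True by (simp add: t_def)
  have "t * U = sqrt U * sqrt V" using True
    by (simp add: t_def field_simps)
  moreover have "V / t = sqrt U * sqrt V" using True
    by (simp add: t_def field_simps)
  ultimately show ?thesis using h[OF t] by simp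
next
  case False
  show ?thesis
  proof (rule ccontr)
    assume nc: "\<not> ?thesis"
    then have c0: "c > 0" using False U V by auto
    show False
    proof (cases "U = 0")
      case True
      have "c \<le> (((V + 1) / c) * U + V / ((V + 1) / c)) / 2" using h[of "(V+1)/c"] c0 V by simp
      also have "\<dots> = c * (V / (V + 1)) / 2" using True V c0 by (simp add: field_simps)
      also have "\<dots> \<le> c * 1 / 2" using c0 V by (intro divide_right_mono mult_left_mono) auto
      also have "\<dots> < c" using c0 by simp
      finally show False by simp
    next
      case False
      then have V0: "V = 0" using \<open>\<not> (U > 0 \<and> V > 0)\<close> U V by auto
      have "c \<le> ((c / (U + 1)) * U + V / (c / (U + 1))) / 2" using h[of "c/(U+1)"] c0 U by simp
      also have "\<dots> = c * (U / (U + 1)) / 2" using V0 U c0 by (simp add: field_simps)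
      also have "\<dots> \<le> c * 1 / 2" using c0 U by (intro divide_right_mono mult_left_mono) auto
      also have "\<dots> < c" using c0 by simp
      finally show False by simp
    qed
  qed
qed

lemma cauchy_schwarz_int:
  fixes u v :: "'a \<Rightarrow> real"
  assumes um: "u \<in> borel_measurable M" and vm: "v \<in> borel_measurable M"
    and u2: "integrable M (\<lambda>x. (u x)\<^sup>2)" and v2: "integrable M (\<lambda>x. (v x)\<^sup>2)"
  shows "integrable M (\<lambda>x. \<bar>u x * v x\<bar>)"
    and "(\<integral>x. \<bar>u x * v x\<bar> \<partial>M) \<le> sqrt (\<integral>x. (u x)\<^sup>2 \<partial>M) * sqrt (\<integral>x. (v x)\<^sup>2 \<partial>M)"
proof -
  have pt: "\<bar>u x * v x\<bar> \<le> (t * (u x)\<^sup>2 + (v x)\<^sup>2 / t) / 2" if t: "t > 0" for t x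
  proof -
    have "0 \<le> (t * \<bar>u x\<bar> - \<bar>v x\<bar>)\<^sup>2" by simp
    then have "2 * t * \<bar>u x\<bar> * \<bar>v x\<bar> \<le> t\<^sup>2 * (u x)\<^sup>2 + (v x)\<^sup>2"
      by (simp add: power2_eq_square algebra_simps)
    moreover have "\<bar>u x * v x\<bar> * (2 * t) = 2 * t * \<bar>u x\<bar> * \<bar>v x\<bar>" by (simp add: abs_mult algebra_simps)
    ultimately have "\<bar>u x * v x\<bar> * (2 * t) \<le> t\<^sup>2 * (u x)\<^sup>2 + (v x)\<^sup>2" by (simp only:)
    then have "\<bar>u x * v x\<bar> \<le> (t\<^sup>2 * (u x)\<^sup>2 + (v x)\<^sup>2) / (2 * t)"
      using t by (simp add: pos_le_divide_eq)
    moreover have "(t * (u x)\<^sup>2 + (v x)\<^sup>2 / t) / 2 = (t\<^sup>2 * (u x)\<^sup>2 + (v x)\<^sup>2) / (2 * t)"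
      using t by (simp add: field_simps power2_eq_square)
    ultimately show ?thesis by (simp only:)
  qed
  show int: "integrable M (\<lambda>x. \<bar>u x * v x\<bar>)"
  proof (rule Bochner_Integration.integrable_bound[of _ "\<lambda>x. (1 * (u x)\<^sup>2 + (v x)\<^sup>2 / 1) / 2"])
    show "integrable M (\<lambda>x. (1 * (u x)\<^sup>2 + (v x)\<^sup>2 / 1) / 2)" using u2 v2 by simp
    show "(\<lambda>x. \<bar>u x * v x\<bar>) \<in> borel_measurable M" using um vm by measurable
    show "AE x in M. norm \<bar>u x * v x\<bar> \<le> norm ((1 * (u x)\<^sup>2 + (v x)\<^sup>2 / 1) / 2)"
      using pt[of 1] by (auto simp: abs_le_iff)
  qed
  show "(\<integral>x. \<bar>u x * v x\<bar> \<partial>M) \<le> sqrt (\<integral>x. (u x)\<^sup>2 \<partial>M) * sqrt (\<integral>x. (v x)\<^sup>2 \<partial>M)"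
  proof (rule amgm_sqrt)
    show "0 \<le> (\<integral>x. (u x)\<^sup>2 \<partial>M)" "0 \<le> (\<integral>x. (v x)\<^sup>2 \<partial>M)" by simp_all
    fix t :: real assume t: "t > 0"
    have "(\<integral>x. \<bar>u x * v x\<bar> \<partial>M) \<le> (\<integral>x. (t * (u x)\<^sup>2 + (v x)\<^sup>2 / t) / 2 \<partial>M)"
      using int u2 v2 pt[OF t] by (intro integral_mono) auto
    also have "\<dots> = (t * (\<integral>x. (u x)\<^sup>2 \<partial>M) + (\<integral>x. (v x)\<^sup>2 \<partial>M) / t) / 2"
      using u2 v2 by simp
    finally show "(\<integral>x. \<bar>u x * v x\<bar> \<partial>M) \<le> (t * (\<integral>x. (u x)\<^sup>2 \<partial>M) + (\<integral>x. (v x)\<^sup>2 \<partial>M) / t) / 2" .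
  qed
qed

lemma abs_int_bound:
  fixes f g :: "'a \<Rightarrow> real"
  assumes "integrable M f" "integrable M g" "\<And>x. x \<in> space M \<Longrightarrow> \<bar>f x\<bar> \<le> g x"
  shows "\<bar>\<integral>x. f x \<partial>M\<bar> \<le> (\<integral>x. g x \<partial>M)"
  using assms by (intro order_trans[OF integral_abs_bound integral_mono]) auto

lemma final_alg:
  fixes a b pinf pK q E1 E2 :: real
  assumes p: "pinf > 0" "pK \<ge> pinf" "pK - pinf \<le> q"
    and e1: "\<bar>a - b\<bar> \<le> E1" and e2: "\<bar>a\<bar> \<le> E2"
  shows "\<bar>a / pinf - b / pK\<bar> \<le> E1 / pK + E2 * q / (pinf * pK)"
proof -
  have pK: "pK > 0" using p by linarith
  have id: "a / pinf - b / pK = (a - b) / pK + a * (pK - pinf) / (pinf * pK)"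
    using p pK by (simp add: field_simps)
  have "\<bar>(a - b) / pK\<bar> \<le> E1 / pK" using e1 pK by (simp add: abs_div divide_right_mono)
  moreover have "\<bar>a * (pK - pinf) / (pinf * pK)\<bar> \<le> E2 * q / (pinf * pK)"
  proof -
    have "\<bar>a * (pK - pinf)\<bar> = \<bar>a\<bar> * (pK - pinf)" using p by (simp add: abs_mult)
    also have "\<dots> \<le> E2 * q" using e2 p by (intro mult_mono) auto
    finally show ?thesis using p pK by (simp add: abs_div divide_right_mono)
  qed
  moreover have "\<bar>(a - b) / pK + a * (pK - pinf) / (pinf * pK)\<bar> \<le> \<bar>(a - b) / pK\<bar> + \<bar>a * (pK - pinf) / (pinf * pK)\<bar>"
    by (rule abs_triangle_ineq)
  ultimately show ?thesis unfolding id by (meson add_mono order_trans)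
qed



theorem proposition2:
  fixes \<alpha> \<alpha>' \<Psi> :: "real \<Rightarrow> real"
    and T x K :: real
    and M :: "'a measure" and W :: "real \<Rightarrow> 'a \<Rightarrow> real" and \<Theta> :: "'a \<Rightarrow> real"
    and N :: "'a \<Rightarrow> (real \<times> real) set"
    and P :: "'b measure" and W' :: "real \<Rightarrow> 'b \<Rightarrow> real" and X :: "real \<Rightarrow> 'b \<Rightarrow> real"
  defines "pK \<equiv> integral\<^sup>L M (\<lambda>\<omega>. exp (- (LINT \<theta>:{0..T}|lborel. min K (phi_fun \<alpha> \<alpha>' (bridge x T W \<Theta> \<theta> \<omega>)))))"
    and "pinf \<equiv> integral\<^sup>L M (\<lambda>\<omega>. exp (- (LINT \<theta>:{0..T}|lborel. phi_fun \<alpha> \<alpha>' (bridge x T W \<Theta> \<theta> \<omega>))))"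
    and "qK \<equiv> measure M {\<omega>\<in>space M. (SUP \<theta>\<in>{0..T}. phi_fun \<alpha> \<alpha>' (bridge x T W \<Theta> \<theta> \<omega>)) > K}"
  assumes T_pos: "T > 0" and K_pos: "K > 0"
    and alpha_deriv: "\<And>y. (\<alpha> has_real_derivative \<alpha>' y) (at y)"
    and alpha'_cont: "continuous_on UNIV \<alpha>'"
    and phi_nonneg: "\<And>y. phi_fun \<alpha> \<alpha>' y \<ge> 0"
    and dens_int: "integrable lborel (end_dens \<alpha> x T)"
    \<comment> \<open>the Brownian bridge \<open>B\<close>: built from a Brownian motion \<open>W\<close> and an independent end point \<open>\<Theta>\<close>\<close>
    and W_bm: "brownian_motion M T W"
    and Theta_distr: "distributed M lborel \<Theta>
          (\<lambda>\<theta>. ennreal (end_dens \<alpha> x T \<theta> / (\<integral>z. end_dens \<alpha> x T z \<partial>lborel)))"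
    and W_Theta_indep: "prob_space.indep_set M
          (rv_events M (Pi\<^sub>M {0..T} (\<lambda>_. borel)) (\<lambda>\<omega>. restrict (\<lambda>t. W t \<omega>) {0..T}))
          (rv_events M borel \<Theta>)"
    \<comment> \<open>the Poisson point process \<open>N\<close> on \<open>[0,T]\<times>[0,K]\<close>, independent of the bridge\<close>
    and N_ppp: "poisson_point_process M ({0..T} \<times> {0..K}) N"
    and N_indep: "prob_space.indep_set M
          (rv_events M (Pi\<^sub>M {0..T} (\<lambda>_. borel) \<Otimes>\<^sub>M borel) (\<lambda>\<omega>. (restrict (\<lambda>t. W t \<omega>) {0..T}, \<Theta> \<omega>)))
          (rv_events M (Pi\<^sub>M {S \<in> sets lborel. S \<subseteq> {0..T} \<times> {0..K}} (\<lambda>_. count_space UNIV))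
             (\<lambda>\<omega>. restrict (\<lambda>S. card (N \<omega> \<inter> S)) {S \<in> sets lborel. S \<subseteq> {0..T} \<times> {0..K}}))"
    \<comment> \<open>the diffusion \<open>X\<close>: \<open>X_t = x + \<integral>_0^t \<alpha>(X_s) ds + W'_t\<close>\<close>
    and W'_bm: "brownian_motion P T W'"
    and X_meas: "\<And>t. t \<in> {0..T} \<Longrightarrow> X t \<in> borel_measurable P"
    and X_cont: "\<And>\<omega>. \<omega> \<in> space P \<Longrightarrow> continuous_on {0..T} (\<lambda>t. X t \<omega>)"
    and X_sde: "\<And>\<omega> t. \<omega> \<in> space P \<Longrightarrow> t \<in> {0..T} \<Longrightarrow>
          X t \<omega> = x + (LINT s:{0..t}|lborel. \<alpha> (X s \<omega>)) + W' t \<omega>"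
    \<comment> \<open>standing assumption: exact-simulation representation\<close>
    and representation: "\<And>\<Psi>'. \<Psi>' \<in> borel_measurable borel \<Longrightarrow>
          integrable M (\<lambda>\<omega>. \<bar>\<Psi>' (bridge x T W \<Theta> T \<omega>)\<bar> * exp (- (LINT \<theta>:{0..T}|lborel. phi_fun \<alpha> \<alpha>' (bridge x T W \<Theta> \<theta> \<omega>)))) \<Longrightarrow>
          integrable P (\<lambda>\<omega>. \<Psi>' (X T \<omega>)) \<and>
          integral\<^sup>L P (\<lambda>\<omega>. \<Psi>' (X T \<omega>))
            = integral\<^sup>L M (\<lambda>\<omega>. \<Psi>' (bridge x T W \<Theta> T \<omega>) * exp (- (LINT \<theta>:{0..T}|lborel. phi_fun \<alpha> \<alpha>' (bridge x T W \<Theta> \<theta> \<omega>)))) / pinf"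
    and Psi_meas: "\<Psi> \<in> borel_measurable borel"
    and Psi_sq: "integrable M (\<lambda>\<omega>. (\<Psi> (bridge x T W \<Theta> T \<omega>))\<^sup>2)"
  shows "\<bar>integral\<^sup>L P (\<lambda>\<omega>. \<Psi> (X T \<omega>)) - truncated_expectation M (phi_fun \<alpha> \<alpha>') (bridge x T W \<Theta>) T N \<Psi>\<bar>
           \<le> sqrt (integral\<^sup>L M (\<lambda>\<omega>. (\<Psi> (bridge x T W \<Theta> T \<omega>))\<^sup>2)) * (qK / (pK * sqrt pinf) + sqrt qK / pK)
         \<and> (bdd_above (range (\<lambda>y. \<bar>\<Psi> y\<bar>)) \<longrightarrow>
           \<bar>integral\<^sup>L P (\<lambda>\<omega>. \<Psi> (X T \<omega>)) - truncated_expectation M (phi_fun \<alpha> \<alpha>') (bridge x T W \<Theta>) T N \<Psi>\<bar>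
             \<le> 2 * (SUP y. \<bar>\<Psi> y\<bar>) / pK * qK)"
proof -
  have Tne: "T \<noteq> 0" using T_pos by simp
  have M: "prob_space M" using W_bm by (simp add: brownian_motion_def)
  interpret prob_space M by (rule M)
  have Wm: "\<And>t. t \<in> {0..T} \<Longrightarrow> W t \<in> borel_measurable M" using W_bm by (simp add: brownian_motion_def)
  have Wc: "\<And>\<omega>. \<omega> \<in> space M \<Longrightarrow> continuous_on {0..T} (\<lambda>t. W t \<omega>)" using W_bm by (simp add: brownian_motion_def)
  have Thm: "\<Theta> \<in> borel_measurable M" using distributed_measurable[OF Theta_distr] by simp
  have alpha_c: "continuous_on UNIV \<alpha>"
    using alpha_deriv by (intro continuous_at_imp_continuous_on ballI DERIV_isCont) auto
  define \<phi> where "\<phi> = phi_fun \<alpha> \<alpha>'"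
  have phic: "continuous_on UNIV \<phi>"
    unfolding \<phi>_def phi_fun_def[abs_def] using alpha_c alpha'_cont by (intro continuous_intros) auto
  have phim: "\<phi> \<in> borel_measurable borel" by (rule borel_measurable_continuous_onI[OF phic])
  define B where "B = bridge x T W \<Theta>"
  have BT: "\<And>\<omega>. B T \<omega> = \<Theta> \<omega>" using Tne by (simp add: B_def bridge_def)
  define F where "F = (\<lambda>t \<omega>. \<phi> (B t \<omega>))"
  have Fc: "\<And>\<omega>. \<omega> \<in> space M \<Longrightarrow> continuous_on {0..T} (\<lambda>t. F t \<omega>)"
  proof -
    fix \<omega> assume \<omega>: "\<omega> \<in> space M"
    have "continuous_on {0..T} (\<lambda>t. B t \<omega>)" unfolding B_def bridge_def
      using Wc[OF \<omega>] Tne by (intro continuous_intros) auto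
    then show "continuous_on {0..T} (\<lambda>t. F t \<omega>)" unfolding F_def
      using continuous_on_compose2[OF phic] by auto
  qed
  have Fnn: "\<And>t \<omega>. F t \<omega> \<ge> 0" using phi_nonneg by (simp add: F_def \<phi>_def)
  interpret P: pathw T K F "space M"
    using T_pos K_pos Fc Fnn by unfold_locales auto

  define S1 :: "((real \<Rightarrow> real) \<times> real) measure" where "S1 = (Pi\<^sub>M {0..T} (\<lambda>_. borel)) \<Otimes>\<^sub>M borel"
  define Y where "Y = (\<lambda>\<omega>. (restrict (\<lambda>t. W t \<omega>) {0..T}, \<Theta> \<omega>))"
  define Mg where "Mg = vimage_algebra (space M) Y S1"
  have Ysp: "Y \<in> space M \<rightarrow> space S1"
    by (auto simp: Y_def S1_def space_pair_measure space_PiM)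
  have Ym: "Y \<in> measurable M S1"
    unfolding Y_def S1_def using Wm Thm
    by (intro measurable_Pair measurable_restrict) auto
  have setsMg: "sets Mg = rv_events M S1 Y"
    unfolding Mg_def rv_events_def by (rule sets_vimage_algebra2[OF Ysp])
  have spg: "space Mg = space M" by (simp add: Mg_def)
  have sub: "sets Mg \<subseteq> sets M"
    unfolding setsMg rv_events_def using Ym by (auto intro: measurable_sets)
  have YMg: "Y \<in> measurable Mg S1" unfolding Mg_def by (rule measurable_vimage_algebra1[OF Ysp])
  have WMg: "W t \<in> borel_measurable Mg" if t: "t \<in> {0..T}" for t
  proof -
    have "(\<lambda>p. fst p t) \<in> measurable S1 borel"
      unfolding S1_def using t by (intro measurable_compose[OF measurable_fst measurable_component_singleton]) auto
    from measurable_compose[OF YMg this] have "(\<lambda>\<omega>. fst (Y \<omega>) t) \<in> borel_measurable Mg" .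
    moreover have "\<And>\<omega>. fst (Y \<omega>) t = W t \<omega>" using t by (simp add: Y_def)
    ultimately show ?thesis by simp
  qed
  have ThMg: "\<Theta> \<in> borel_measurable Mg"
  proof -
    have "snd \<in> measurable S1 borel" unfolding S1_def by (rule measurable_snd)
    from measurable_compose[OF YMg this] show ?thesis by (simp add: Y_def)
  qed
  have FMg: "F t \<in> borel_measurable Mg" if t: "t \<in> {0..T}" for t
  proof -
    have "(\<lambda>\<omega>. x + t / T * (\<Theta> \<omega> - x) + W t \<omega> - t / T * W T \<omega>) \<in> borel_measurable Mg"
      using WMg[OF t] WMg[of T] ThMg T_pos by (intro borel_measurable_add borel_measurable_diff borel_measurable_times borel_measurable_const) auto
    from measurable_compose[OF this phim] show ?thesis
      by (simp add: F_def B_def bridge_def)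
  qed
  have Nfin: "\<And>\<omega>. \<omega> \<in> space M \<Longrightarrow> finite (N \<omega>)" and Nsub: "\<And>\<omega>. \<omega> \<in> space M \<Longrightarrow> N \<omega> \<subseteq> {0..T} \<times> {0..K}"
    using N_ppp by (auto simp: poisson_point_process_def)
  define IS :: "(real \<times> real) set set" where "IS = {S \<in> sets lborel. S \<subseteq> {0..T} \<times> {0..K}}"
  define Z where "Z = (\<lambda>\<omega>. restrict (\<lambda>S. card (N \<omega> \<inter> S)) IS)"
  define S2 :: "((real \<times> real) set \<Rightarrow> nat) measure" where "S2 = Pi\<^sub>M IS (\<lambda>_. count_space UNIV)"
  have Hev: "{\<omega>\<in>space M. N \<omega> \<inter> S = {}} \<in> rv_events M S2 Z"
    and Hms: "measure M {\<omega>\<in>space M. N \<omega> \<inter> S = {}} = exp (- measure lborel S)"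
    and Hset: "{\<omega>\<in>space M. N \<omega> \<inter> S = {}} \<in> sets M"
    if S: "S \<in> sets lborel" "S \<subseteq> {0..T} \<times> {0..K}" for S
  proof -
    have SI: "S \<in> IS" using S by (simp add: IS_def)
    have eq: "{\<omega>\<in>space M. N \<omega> \<inter> S = {}} = {\<omega>\<in>space M. card (N \<omega> \<inter> S) = 0}"
      using Nfin by auto
    have "(\<lambda>z. z S) -` {0} \<inter> space S2 \<in> sets S2"
      unfolding S2_def by (rule measurable_sets[OF measurable_component_singleton[OF SI]]) simp
    moreover have "Z -` ((\<lambda>z. z S) -` {0} \<inter> space S2) \<inter> space M = {\<omega>\<in>space M. N \<omega> \<inter> S = {}}"
      unfolding eq using SI by (auto simp: Z_def S2_def space_PiM)
    ultimately show "{\<omega>\<in>space M. N \<omega> \<inter> S = {}} \<in> rv_events M S2 Z"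
      unfolding rv_events_def by blast
    have pp: "(\<lambda>\<omega>. card (N \<omega> \<inter> S)) \<in> measurable M (count_space UNIV)"
      "measure M {\<omega>\<in>space M. card (N \<omega> \<inter> S) = 0} = measure lborel S ^ 0 / fact 0 * exp (- measure lborel S)"
      using N_ppp S unfolding poisson_point_process_def by blast+
    then show "measure M {\<omega>\<in>space M. N \<omega> \<inter> S = {}} = exp (- measure lborel S)"
      unfolding eq by simp
    have "(\<lambda>\<omega>. card (N \<omega> \<inter> S)) -` {0} \<inter> space M \<in> sets M"
      by (rule measurable_sets[OF pp(1)]) simp
    then show "{\<omega>\<in>space M. N \<omega> \<inter> S = {}} \<in> sets M" unfolding eq by (simp add: vimage_def Int_def conj_commute)
  qed
  have indepH: "measure M (G0 \<inter> {\<omega>\<in>space M. N \<omega> \<inter> S = {}}) = measure M G0 * exp (- measure lborel S)"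
    if S: "S \<in> sets lborel" "S \<subseteq> {0..T} \<times> {0..K}" and G0: "G0 \<in> sets Mg" for S G0
  proof -
    have "indep_set (rv_events M S1 Y) (rv_events M S2 Z)"
      using N_indep unfolding S1_def Y_def S2_def Z_def IS_def .
    from indep_setD[OF this, of G0 "{\<omega>\<in>space M. N \<omega> \<inter> S = {}}"] show ?thesis
      using G0 setsMg Hev[OF S] Hms[OF S] by simp
  qed
  interpret C: core T K F M Mg N
    using sub spg FMg Nfin Nsub Hset indepH by unfold_locales auto

  have brT: "\<And>\<omega>. bridge x T W \<Theta> T \<omega> = \<Theta> \<omega>" using BT by (simp add: B_def)
  have FM: "\<And>t. t \<in> {0..T} \<Longrightarrow> F t \<in> borel_measurable M" using FMg C.meas_g_M by blast
  have LK_eq: "\<And>\<omega>. P.Lf \<omega> = (LINT \<theta>:{0..T}|lborel. min K (F \<theta> \<omega>))"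
    unfolding P.Lf_def by (simp add: P.g_def[abs_def])
  define LI where "LI = (\<lambda>\<omega>. LINT \<theta>:{0..T}|lborel. F \<theta> \<omega>)"
  have pathn: "\<And>n. pathw T (real n + 1) F (space M)"
    using T_pos Fc Fnn by (auto simp: pathw_def)
  have Fbdd: "\<exists>Bd. \<forall>\<theta>\<in>{0..T}. F \<theta> \<omega> \<le> Bd" if \<omega>: "\<omega> \<in> space M" for \<omega>
  proof -
    have "compact ((\<lambda>t. F t \<omega>) ` {0..T})" by (intro compact_continuous_image Fc[OF \<omega>] compact_Icc)
    then have "bdd_above ((\<lambda>t. F t \<omega>) ` {0..T})" by (intro bounded_imp_bdd_above compact_imp_bounded)
    then show ?thesis by (auto simp: bdd_above_def)
  qed
  have Fint: "set_integrable lborel {0..T} (\<lambda>\<theta>. F \<theta> \<omega>)" if "\<omega> \<in> space M" for \<omega>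
    by (rule borel_integrable_atLeastAtMost'[OF Fc[OF that]])
  have Fmint: "set_integrable lborel {0..T} (\<lambda>\<theta>. min K' (F \<theta> \<omega>))" if "\<omega> \<in> space M" for \<omega> K'
    by (rule borel_integrable_atLeastAtMost') (intro continuous_intros Fc[OF that])
  have LI_meas: "LI \<in> borel_measurable M"
  proof (rule borel_measurable_LIMSEQ_real[where u="\<lambda>n. pathw.Lf T (real n + 1) F"])
    fix \<omega> assume \<omega>: "\<omega> \<in> space M"
    obtain Bd where Bd: "\<forall>\<theta>\<in>{0..T}. F \<theta> \<omega> \<le> Bd" using Fbdd[OF \<omega>] by blast
    have "eventually (\<lambda>n. pathw.Lf T (real n + 1) F \<omega> = LI \<omega>) sequentially"
      unfolding eventually_sequentially
    proof (intro exI allI impI)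
      fix n assume n: "nat \<lceil>Bd\<rceil> \<le> n"
      then have "Bd \<le> real n + 1" by linarith
      then have "\<And>\<theta>. \<theta> \<in> {0..T} \<Longrightarrow> min (real n + 1) (F \<theta> \<omega>) = F \<theta> \<omega>" using Bd by fastforce
      moreover have "pathw.g (real n + 1) F \<omega> = (\<lambda>\<theta>. min (real n + 1) (F \<theta> \<omega>))"
        by (rule ext) (simp add: pathw.g_def[OF pathn])
      ultimately show "pathw.Lf T (real n + 1) F \<omega> = LI \<omega>"
        unfolding pathw.Lf_def[OF pathn] LI_def
        by (intro set_lebesgue_integral_cong) auto
    qed
    then show "(\<lambda>n. pathw.Lf T (real n + 1) F \<omega>) \<longlonglongrightarrow> LI \<omega>" by (rule tendsto_eventually)
  next
    fix n show "pathw.Lf T (real n + 1) F \<in> borel_measurable M"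
      by (rule pathw.Lf_meas[OF pathn refl FM])
  qed
  have LK_meas: "P.Lf \<in> borel_measurable M" by (rule C.meas_g_M[OF C.Lf_meas_g])
  have LK_nn: "\<And>\<omega>. 0 \<le> P.Lf \<omega>" by (rule P.Lf_nonneg)
  have LI_nn: "\<And>\<omega>. 0 \<le> LI \<omega>" unfolding LI_def set_lebesgue_integral_def using Fnn by (intro integral_nonneg_AE) (auto simp: indicator_def)
  have LK_le: "P.Lf \<omega> \<le> LI \<omega>" if \<omega>: "\<omega> \<in> space M" for \<omega>
    unfolding LK_eq LI_def by (intro set_integral_mono Fmint Fint \<omega>) auto
  define eK where "eK = (\<lambda>\<omega>. exp (- P.Lf \<omega>))"
  define eI where "eI = (\<lambda>\<omega>. exp (- LI \<omega>))"
  have eK_m: "eK \<in> borel_measurable M" unfolding eK_def using LK_meas by measurable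
  have eI_m: "eI \<in> borel_measurable M" unfolding eI_def using LI_meas by measurable
  have eK_b: "\<And>\<omega>. 0 < eK \<omega> \<and> eK \<omega> \<le> 1" using LK_nn by (simp add: eK_def)
  have eI_b: "\<And>\<omega>. 0 < eI \<omega> \<and> eI \<omega> \<le> 1" using LI_nn by (simp add: eI_def)
  have eIK: "\<And>\<omega>. \<omega> \<in> space M \<Longrightarrow> eI \<omega> \<le> eK \<omega>" using LK_le by (simp add: eI_def eK_def)
  have eK_int: "integrable M eK"
    using eK_m eK_b by (intro integrable_const_bound[where B=1]) (auto intro!: AE_I2 simp: abs_le_iff less_imp_le)
  have eI_int: "integrable M eI"
    using eI_m eI_b by (intro integrable_const_bound[where B=1]) (auto intro!: AE_I2 simp: abs_le_iff less_imp_le)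
  have pK_eq: "pK = integral\<^sup>L M eK"
    unfolding pK_def eK_def LK_eq unfolding F_def B_def \<phi>_def ..
  have pinf_eq: "pinf = integral\<^sup>L M eI"
    unfolding pinf_def eI_def LI_def unfolding F_def B_def \<phi>_def ..

  define \<psi> where "\<psi> = (\<lambda>\<omega>. \<Psi> (\<Theta> \<omega>))"
  have \<psi>_g: "\<psi> \<in> borel_measurable Mg" unfolding \<psi>_def by (rule measurable_compose[OF ThMg Psi_meas])
  have \<psi>_m: "\<psi> \<in> borel_measurable M" by (rule C.meas_g_M[OF \<psi>_g])
  have \<psi>2: "integrable M (\<lambda>\<omega>. (\<psi> \<omega>)\<^sup>2)" using Psi_sq by (simp add: brT \<psi>_def)
  have absb: "\<And>y::real. \<bar>y\<bar> \<le> 1 + y\<^sup>2"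
  proof -
    fix y :: real
    have "0 \<le> (\<bar>y\<bar> - 1/2)\<^sup>2" by simp
    then have "\<bar>y\<bar> \<le> 1/4 + \<bar>y\<bar>\<^sup>2" by (simp add: power2_eq_square algebra_simps)
    then show "\<bar>y\<bar> \<le> 1 + y\<^sup>2" by simp
  qed
  have \<psi>_int: "integrable M \<psi>"
    by (rule Bochner_Integration.integrable_bound[of _ "\<lambda>\<omega>. 1 + (\<psi> \<omega>)\<^sup>2"])
       (use \<psi>2 \<psi>_m absb in \<open>auto intro!: AE_I2 simp: abs_le_iff\<close>)
  have int_mul: "integrable M (\<lambda>\<omega>. \<psi> \<omega> * h \<omega>)" if h: "h \<in> borel_measurable M" "\<And>\<omega>. \<bar>h \<omega>\<bar> \<le> 1" for h
    by (rule Bochner_Integration.integrable_bound[of _ \<psi>])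
       (use \<psi>_int \<psi>_m h in \<open>auto intro!: AE_I2 simp: abs_mult intro: mult_left_le\<close>)
  define Q where "Q = {\<omega>\<in>space M. (SUP \<theta>\<in>{0..T}. F \<theta> \<omega>) > K}"
  have qK_eq: "qK = measure M Q"
    unfolding qK_def Q_def unfolding F_def B_def \<phi>_def ..
  have bddF: "bdd_above ((\<lambda>t. F t \<omega>) ` {0..T})" if \<omega>: "\<omega> \<in> space M" for \<omega>
    using Fbdd[OF \<omega>] by (auto simp: bdd_above_def)
  have Q_eq: "Q = (\<Union>q\<in>\<rat> \<inter> {0..T}. {\<omega>\<in>space M. K < F q \<omega>})"
  proof (intro equalityI subsetI)
    fix \<omega> assume "\<omega> \<in> Q"
    then have \<omega>: "\<omega> \<in> space M" and s: "K < (SUP \<theta>\<in>{0..T}. F \<theta> \<omega>)" by (auto simp: Q_def)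
    from s obtain \<theta> where \<theta>: "\<theta> \<in> {0..T}" "K < F \<theta> \<omega>"
      using less_cSUP_iff[OF _ bddF[OF \<omega>]] T_pos by auto
    from Fc[OF \<omega>, unfolded continuous_on_iff] \<theta> obtain d where d: "d > 0"
      "\<And>x'. x' \<in> {0..T} \<Longrightarrow> dist x' \<theta> < d \<Longrightarrow> dist (F x' \<omega>) (F \<theta> \<omega>) < F \<theta> \<omega> - K"
      by (metis diff_gt_0_iff_gt)
    obtain q where q: "q \<in> \<rat>" "q \<in> {0..T}" "\<bar>q - \<theta>\<bar> < d"
      using rat_near[of 0 T \<theta> d] T_pos \<theta> d by auto
    have "dist (F q \<omega>) (F \<theta> \<omega>) < F \<theta> \<omega> - K" using d(2)[of q] q by (simp add: dist_real_def)
    then have "K < F q \<omega>" by (simp add: dist_real_def abs_less_iff)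
    then show "\<omega> \<in> (\<Union>q\<in>\<rat> \<inter> {0..T}. {\<omega>\<in>space M. K < F q \<omega>})" using q \<omega> by auto
  next
    fix \<omega> assume "\<omega> \<in> (\<Union>q\<in>\<rat> \<inter> {0..T}. {\<omega>\<in>space M. K < F q \<omega>})"
    then obtain q where q: "q \<in> {0..T}" "K < F q \<omega>" and \<omega>: "\<omega> \<in> space M" by auto
    have "F q \<omega> \<le> (SUP \<theta>\<in>{0..T}. F \<theta> \<omega>)" by (rule cSUP_upper[OF q(1) bddF[OF \<omega>]])
    then show "\<omega> \<in> Q" using q \<omega> by (simp add: Q_def)
  qed
  have Q_sets: "Q \<in> sets M"
    unfolding Q_eq
  proof (rule sets.countable_UN'')
    show "countable (\<rat> \<inter> {0..T})" by (intro countable_Int1 countable_rat)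
    fix q assume "q \<in> \<rat> \<inter> {0..T}"
    then have "F q \<in> borel_measurable M" using FM by auto
    then show "{\<omega>\<in>space M. K < F q \<omega>} \<in> sets M" by measurable
  qed
  have noQ: "F \<theta> \<omega> \<le> K" if \<omega>: "\<omega> \<in> space M" "\<omega> \<notin> Q" and \<theta>: "\<theta> \<in> {0..T}" for \<omega> \<theta>
  proof -
    have "F \<theta> \<omega> \<le> (SUP \<theta>\<in>{0..T}. F \<theta> \<omega>)" by (rule cSUP_upper[OF \<theta> bddF[OF \<omega>(1)]])
    also have "\<dots> \<le> K" using \<omega> by (simp add: Q_def not_less)
    finally show ?thesis .
  qed
  have diffQ: "\<bar>eI \<omega> - eK \<omega>\<bar> \<le> indicator Q \<omega>" if \<omega>: "\<omega> \<in> space M" for \<omega>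
  proof (cases "\<omega> \<in> Q")
    case True
    then show ?thesis using eI_b[of \<omega>] eK_b[of \<omega>] by (auto simp: abs_le_iff)
  next
    case False
    have "P.Lf \<omega> = LI \<omega>" unfolding LK_eq LI_def
      using noQ[OF \<omega> False] by (intro set_lebesgue_integral_cong) auto
    then show ?thesis by (simp add: eI_def eK_def)
  qed

  have acc_eq: "accept_event M (phi_fun \<alpha> \<alpha>') (bridge x T W \<Theta>) T N = C.Acc"
  proof -
    have "N \<omega> \<inter> {(t, y). 0 \<le> t \<and> t \<le> T \<and> 0 \<le> y \<and> y \<le> phi_fun \<alpha> \<alpha>' (bridge x T W \<Theta> t \<omega>)} = N \<omega> \<inter> P.D \<omega>"
      if \<omega>: "\<omega> \<in> space M" for \<omega>
    proof -
      have "\<And>t y. (t, y) \<in> N \<omega> \<Longrightarrow> y \<le> K" using Nsub[OF \<omega>] by auto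
      then show ?thesis
        unfolding P.D_def P.g_def[abs_def] unfolding F_def B_def \<phi>_def by auto
    qed
    then show ?thesis unfolding accept_event_def C.Acc_def by auto
  qed
  have mAcc: "measure M C.Acc = pK"
  proof -
    have "emeasure M C.Acc = (\<integral>\<^sup>+\<omega>. 1 * indicator C.Acc \<omega> \<partial>M)" using C.Acc_sets by simp
    also have "\<dots> = (\<integral>\<^sup>+\<omega>. 1 * ennreal (exp (- P.Lf \<omega>)) \<partial>M)" by (rule C.core_eq) simp
    also have "\<dots> = (\<integral>\<^sup>+\<omega>. ennreal (eK \<omega>) \<partial>M)" by (simp add: eK_def)
    also have "\<dots> = ennreal (integral\<^sup>L M eK)"
      using eK_int eK_b by (intro nn_integral_eq_integral) (auto intro!: AE_I2 less_imp_le)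
    finally show ?thesis using pK_eq by (simp add: emeasure_eq_measure integral_nonneg_AE eK_b less_imp_le)
  qed
  have indAcc_int: "integrable M (\<lambda>\<omega>. \<psi> \<omega> * indicator C.Acc \<omega>)"
    using C.Acc_sets by (intro int_mul) auto
  have eK_int2: "integrable M (\<lambda>\<omega>. \<psi> \<omega> * eK \<omega>)"
    using eK_m eK_b by (intro int_mul) (auto simp: abs_le_iff less_imp_le)
  have eI_int2: "integrable M (\<lambda>\<omega>. \<psi> \<omega> * eI \<omega>)"
    using eI_m eI_b by (intro int_mul) (auto simp: abs_le_iff less_imp_le)
  have b_eq: "(\<integral>\<omega>. \<psi> \<omega> * indicator C.Acc \<omega> \<partial>M) = (\<integral>\<omega>. \<psi> \<omega> * eK \<omega> \<partial>M)"
  proof -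
    have ce: "(\<integral>\<^sup>+\<omega>. ennreal (s * \<psi> \<omega>) * indicator C.Acc \<omega> \<partial>M) = (\<integral>\<^sup>+\<omega>. ennreal (s * \<psi> \<omega>) * ennreal (eK \<omega>) \<partial>M)" for s :: real
      unfolding eK_def using \<psi>_g by (intro C.core_eq) measurable
    have e1: "ennreal (s * (\<psi> \<omega> * indicator C.Acc \<omega>)) = ennreal (s * \<psi> \<omega>) * indicator C.Acc \<omega>" for s \<omega>
      by (simp add: indicator_def)
    have e2: "ennreal (s * (\<psi> \<omega> * eK \<omega>)) = ennreal (s * \<psi> \<omega>) * ennreal (eK \<omega>)" for s \<omega>
    proof -
      have "s * (\<psi> \<omega> * eK \<omega>) = (s * \<psi> \<omega>) * eK \<omega>" by simp
      then show ?thesis using eK_b[of \<omega>] by (simp only: ennreal_mult'' less_imp_le)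
    qed
    have p1: "(\<integral>\<^sup>+\<omega>. ennreal (\<psi> \<omega> * indicator C.Acc \<omega>) \<partial>M) = (\<integral>\<^sup>+\<omega>. ennreal (\<psi> \<omega> * eK \<omega>) \<partial>M)"
      using ce[of 1] e1[of 1] e2[of 1] by simp
    have p2: "(\<integral>\<^sup>+\<omega>. ennreal (- (\<psi> \<omega> * indicator C.Acc \<omega>)) \<partial>M) = (\<integral>\<^sup>+\<omega>. ennreal (- (\<psi> \<omega> * eK \<omega>)) \<partial>M)"
      using ce[of "-1"] e1[of "-1"] e2[of "-1"] by simp
    show ?thesis
      unfolding real_lebesgue_integral_def[OF indAcc_int] real_lebesgue_integral_def[OF eK_int2] p1 p2 ..
  qed

  define a where "a = (\<integral>\<omega>. \<psi> \<omega> * eI \<omega> \<partial>M)"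
  define b where "b = (\<integral>\<omega>. \<psi> \<omega> * eK \<omega> \<partial>M)"
  define S where "S = (\<integral>\<omega>. (\<psi> \<omega>)\<^sup>2 \<partial>M)"
  have rep: "integral\<^sup>L P (\<lambda>\<omega>. \<Psi> (X T \<omega>)) = a / pinf"
  proof -
    have eIe: "\<And>\<omega>. exp (- (LINT \<theta>:{0..T}|lborel. phi_fun \<alpha> \<alpha>' (bridge x T W \<Theta> \<theta> \<omega>))) = eI \<omega>"
      unfolding eI_def LI_def unfolding F_def B_def \<phi>_def ..
    have "integrable M (\<lambda>\<omega>. \<bar>\<Psi> (bridge x T W \<Theta> T \<omega>)\<bar> * exp (- (LINT \<theta>:{0..T}|lborel. phi_fun \<alpha> \<alpha>' (bridge x T W \<Theta> \<theta> \<omega>))))"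
      unfolding eIe brT using integrable_abs[OF eI_int2] eI_b
      by (simp add: abs_mult \<psi>_def less_imp_le)
    from representation[OF Psi_meas this] show ?thesis
      unfolding eIe brT a_def \<psi>_def by simp
  qed
  have trunc: "truncated_expectation M (phi_fun \<alpha> \<alpha>') (bridge x T W \<Theta>) T N \<Psi> = b / pK"
    unfolding truncated_expectation_def acc_eq mAcc brT b_def using b_eq by (simp add: \<psi>_def)
  have pinf_pos: "pinf > 0"
  proof -
    have "0 \<le> pinf" unfolding pinf_eq using eI_b by (intro integral_nonneg_AE) (auto intro!: AE_I2 less_imp_le)
    moreover have "pinf \<noteq> 0"
    proof
      assume "pinf = 0"
      have nn: "AE \<omega> in M. 0 \<le> eI \<omega>" by (rule AE_I2) (simp add: eI_b less_imp_le)
      from \<open>pinf = 0\<close> have "AE \<omega> in M. eI \<omega> = 0" unfolding pinf_eq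
        using integral_nonneg_eq_0_iff_AE[OF eI_int nn] by simp
      then have "AE \<omega> in M. False" using eI_b by (auto elim: AE_mp[rotated] intro!: AE_I2 simp: less_le)
      then show False by (simp add: AE_False)
    qed
    ultimately show ?thesis by simp
  qed
  have pK_ge: "pK \<ge> pinf" unfolding pK_eq pinf_eq using eK_int eI_int eIK by (intro integral_mono) auto
  have indQ_int: "integrable M (indicator Q :: 'a \<Rightarrow> real)"
    using Q_sets by (intro integrable_const_bound[where B=1]) (auto intro!: AE_I2 simp: indicator_def)
  have pK_diff: "pK - pinf \<le> qK"
  proof -
    have "pK - pinf = (\<integral>\<omega>. eK \<omega> - eI \<omega> \<partial>M)" unfolding pK_eq pinf_eq using eK_int eI_int by simp
    also have "\<dots> \<le> (\<integral>\<omega>. indicator Q \<omega> \<partial>M)"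
      using eK_int eI_int indQ_int diffQ by (intro integral_mono) (auto simp: abs_le_iff)
    also have "\<dots> = qK" using Q_sets qK_eq by simp
    finally show ?thesis .
  qed
  have abq: "\<bar>a - b\<bar> \<le> (\<integral>\<omega>. \<bar>\<psi> \<omega> * indicator Q \<omega>\<bar> \<partial>M)"
  proof -
    have "a - b = (\<integral>\<omega>. \<psi> \<omega> * (eI \<omega> - eK \<omega>) \<partial>M)"
      unfolding a_def b_def using eI_int2 eK_int2 by (simp add: right_diff_distrib)
    also have "\<bar>\<dots>\<bar> \<le> (\<integral>\<omega>. \<bar>\<psi> \<omega> * indicator Q \<omega>\<bar> \<partial>M)"
    proof (rule abs_int_bound)
      show "integrable M (\<lambda>\<omega>. \<psi> \<omega> * (eI \<omega> - eK \<omega>))" using eI_int2 eK_int2 by (simp add: right_diff_distrib)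
      show "integrable M (\<lambda>\<omega>. \<bar>\<psi> \<omega> * indicator Q \<omega>\<bar>)" using Q_sets by (intro integrable_abs int_mul) auto
      fix \<omega> assume \<omega>: "\<omega> \<in> space M"
      show "\<bar>\<psi> \<omega> * (eI \<omega> - eK \<omega>)\<bar> \<le> \<bar>\<psi> \<omega> * indicator Q \<omega>\<bar>"
        using diffQ[OF \<omega>] by (simp add: abs_mult mult_left_mono)
    qed
    finally show ?thesis .
  qed
  have aI: "\<bar>a\<bar> \<le> (\<integral>\<omega>. \<bar>\<psi> \<omega> * eI \<omega>\<bar> \<partial>M)"
    unfolding a_def by (rule abs_int_bound) (use eI_int2 in auto)
  have pK_pos: "pK > 0" using pinf_pos pK_ge by linarith
  have qK_nn: "qK \<ge> 0" using qK_eq by simp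
  have S_nn: "S \<ge> 0" unfolding S_def by (intro integral_nonneg_AE) auto
  have part_a: "\<bar>a / pinf - b / pK\<bar> \<le> sqrt S * (qK / (pK * sqrt pinf) + sqrt qK / pK)"
  proof -
    have eqi: "(\<lambda>\<omega>. (indicator Q \<omega> :: real)\<^sup>2) = indicator Q" by (rule ext) (simp add: indicator_def)
    have ind2: "integrable M (\<lambda>\<omega>. (indicator Q \<omega> :: real)\<^sup>2)" unfolding eqi by (rule indQ_int)
    have "(\<integral>\<omega>. \<bar>\<psi> \<omega> * indicator Q \<omega>\<bar> \<partial>M) \<le> sqrt S * sqrt (\<integral>\<omega>. (indicator Q \<omega> :: real)\<^sup>2 \<partial>M)"
      unfolding S_def by (rule cauchy_schwarz_int(2)[OF \<psi>_m borel_measurable_indicator[OF Q_sets] \<psi>2 ind2])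
    also have "(\<integral>\<omega>. (indicator Q \<omega> :: real)\<^sup>2 \<partial>M) = qK"
      unfolding eqi using Q_sets qK_eq by simp
    finally have E1: "\<bar>a - b\<bar> \<le> sqrt S * sqrt qK" using abq by linarith
    have eI2: "integrable M (\<lambda>\<omega>. (eI \<omega>)\<^sup>2)"
      using eI_m eI_b by (intro integrable_const_bound[where B=1]) (auto intro!: AE_I2 simp: abs_le_iff less_imp_le power_le_one)
    have "(\<integral>\<omega>. \<bar>\<psi> \<omega> * eI \<omega>\<bar> \<partial>M) \<le> sqrt S * sqrt (\<integral>\<omega>. (eI \<omega>)\<^sup>2 \<partial>M)"
      unfolding S_def by (rule cauchy_schwarz_int(2)[OF \<psi>_m eI_m \<psi>2 eI2])
    also have "\<dots> \<le> sqrt S * sqrt pinf"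
    proof (intro mult_left_mono real_sqrt_le_mono)
      show "(\<integral>\<omega>. (eI \<omega>)\<^sup>2 \<partial>M) \<le> pinf" unfolding pinf_eq
        using eI2 eI_int eI_b by (intro integral_mono) (auto simp: power2_eq_square mult_le_cancel_right1 less_imp_le)
    qed (use S_nn in simp)
    finally have E2: "\<bar>a\<bar> \<le> sqrt S * sqrt pinf" using aI by linarith
    have "\<bar>a / pinf - b / pK\<bar> \<le> sqrt S * sqrt qK / pK + sqrt S * sqrt pinf * qK / (pinf * pK)"
      by (rule final_alg[OF pinf_pos pK_ge pK_diff E1 E2])
    also have "\<dots> = sqrt S * (qK / (pK * sqrt pinf) + sqrt qK / pK)"
    proof -
      define r where "r = sqrt pinf"
      have r: "r > 0" "pinf = r * r" using pinf_pos by (auto simp: r_def)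
      show ?thesis unfolding r_def[symmetric] r(2) using r(1) pK_pos by (simp add: field_simps)
    qed
    finally show ?thesis .
  qed
  have part_b: "\<bar>a / pinf - b / pK\<bar> \<le> 2 * (SUP y. \<bar>\<Psi> y\<bar>) / pK * qK"
    if bdd: "bdd_above (range (\<lambda>y. \<bar>\<Psi> y\<bar>))"
  proof -
    define Mx where "Mx = (SUP y. \<bar>\<Psi> y\<bar>)"
    have psiM: "\<bar>\<psi> \<omega>\<bar> \<le> Mx" for \<omega> unfolding Mx_def \<psi>_def by (rule cSUP_upper[OF UNIV_I bdd])
    have "(\<integral>\<omega>. \<bar>\<psi> \<omega> * indicator Q \<omega>\<bar> \<partial>M) \<le> (\<integral>\<omega>. Mx * indicator Q \<omega> \<partial>M)"
    proof (rule integral_mono)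
      show "integrable M (\<lambda>\<omega>. \<bar>\<psi> \<omega> * indicator Q \<omega>\<bar>)" using Q_sets by (intro integrable_abs int_mul) auto
      show "integrable M (\<lambda>\<omega>. Mx * indicator Q \<omega>)" using indQ_int by (rule integrable_mult_right)
      fix \<omega> show "\<bar>\<psi> \<omega> * indicator Q \<omega>\<bar> \<le> Mx * indicator Q \<omega>" using psiM[of \<omega>] by (simp add: abs_mult indicator_def)
    qed
    also have "\<dots> = Mx * qK" using Q_sets qK_eq by simp
    finally have E1: "\<bar>a - b\<bar> \<le> Mx * qK" using abq by linarith
    have "(\<integral>\<omega>. \<bar>\<psi> \<omega> * eI \<omega>\<bar> \<partial>M) \<le> (\<integral>\<omega>. Mx * eI \<omega> \<partial>M)"
      using eI_int2 eI_int psiM eI_b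
      by (intro integral_mono integrable_abs) (auto simp: abs_mult less_imp_le intro: mult_right_mono)
    also have "\<dots> = Mx * pinf" using pinf_eq by simp
    finally have E2: "\<bar>a\<bar> \<le> Mx * pinf" using aI by linarith
    have "\<bar>a / pinf - b / pK\<bar> \<le> Mx * qK / pK + Mx * pinf * qK / (pinf * pK)"
      by (rule final_alg[OF pinf_pos pK_ge pK_diff E1 E2])
    also have "\<dots> = 2 * Mx / pK * qK" using pinf_pos pK_pos by (simp add: field_simps)
    finally show ?thesis unfolding Mx_def .
  qed
  have Seq: "(\<integral>\<omega>. (\<Psi> (bridge x T W \<Theta> T \<omega>))\<^sup>2 \<partial>M) = S" unfolding S_def brT \<psi>_def ..
  show ?thesis unfolding rep trunc Seq using part_a part_b by blast
qed


end
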